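(* Let $\mathcal E$ be a relation on closed values and $v_0,v_1$ closed values with $v_0\approx^p_{\mathcal E}v_1$. Then for every context $C$ such that $C[v_0]$ and $C[v_1]$ are closed, $C[v_0]\approx^p_{\mathcal E}C[v_1]$.
   Context: Terms of $\lambda_S$: $t ::= x \mid \lambda x.t \mid t\,t \mid \mathcal{S}k.t \mid \langle t\rangle$ (shift binds $k$; $\langle\cdot\rangle$ reset), up to $\alpha$-conversion. Values $v::=\lambda x.t$. Pure contexts $E ::= \Box \mid v\,E \mid E\,t$; evaluation contexts $F ::= \Box \mid v\,F \mid F\,t \mid \langle F\rangle$; contexts $C ::= \Box \mid \lambda x.C \mid t\,C \mid C\,t \mid \mathcal{S}k.C \mid \langle C\rangle$. Reduction: $F[(\lambda x.t)v]\to F[t\{v/x\}]$; $F[\langle E[\mathcal Sk.t]\rangle]\to F[\langle t\{\lambda x.\langle E[x]\rangle/k\}\rangle]$ ($x\notin\mathrm{fv}(E)$); $F[\langle v\rangle]\to F[v]$; $\to^*$ reflexive-transitive closure. Program: term $\langle t\rangle$ (ranged over by $p$). Closures: for $R$ a relation on closed terms, $\widetilde R$ is the smallest relation containing $R$, all $(x,x)$, closed under all term constructors, restricted to closed terms; $\widehat R$ is the smallest relation on closed evaluation contexts with $\Box\widehat R\Box$, $v_0F_0\widehat Rv_1F_1$ if $F_0\widehat RF_1,v_0\widetilde Rv_1$; $F_0t_0\widehat RF_1t_1$ if $F_0\widehat RF_1,t_0\widetilde Rt_1$; $\langle F_0\rangle\widehat R\langle F_1\rangle$ if $F_0\widehat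 RF_1$. Environmental bisimilarity for programs: an environment $\mathcal E$ is a relation on closed values; an environmental relation $\mathcal X$ is a set of environments and triples $(\mathcal E,t_0,t_1)$, $t_0,t_1$ closed, written $t_0\mathcal X_{\mathcal E}t_1$. $\mathcal X$ is an environmental bisimulation for programs if (1) if $t_0\mathcal X_{\mathcal E}t_1$ and $t_0,t_1$ are not both programs, then for all pure $E_0\widehat{\mathcal E}E_1$, $\langle E_0[t_0]\rangle\mathcal X_{\mathcal E}\langle E_1[t_1]\rangle$; (2) if $p_0\mathcal X_{\mathcal E}p_1$: (a) $p_0\to p_0'$ (program) implies $p_1\to^*p_1'$ (program) with $p_0'\mathcal X_{\mathcal E}p_1'$; (b) $p_0\to v_0$ implies $p_1\to^*v_1$ and $\{(v_0,v_1)\}\cup\mathcal E\in\mathcal X$; (c) symmetric conditions; (3) for $\mathcal E\in\mathcal X$, $(\lambda x.t_0)\mathcal E(\lambda x.t_1)$ and $v_0\widetilde{\mathcal E}v_1$ imply $t_0\{v_0/x\}\mathcal X_{\mathcal E}t_1\{v_1/x\}$. $\approx^p$ is the largest such relation; $t_0\approx^p_{\mathcal E}t_1$ means $(\mathcal E,t_0,t_1)\in\approx^p$. *)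

theory Defs
  imports Main
begin

datatype trm = Var nat | Lam trm | App trm trm | Shift trm | Reset trm
  (* Lam t: lambda binding index 0 in t;  Shift t: shift binding k as index 0 in t *)

fun closed_at :: "nat \<Rightarrow> trm \<Rightarrow> bool" where
  "closed_at k (Var n) = (n < k)"
| "closed_at k (Lam t) = closed_at (Suc k) t"
| "closed_at k (App s t) = (closed_at k s \<and> closed_at k t)"
| "closed_at k (Shift t) = closed_at (Suc k) t"
| "closed_at k (Reset t) = closed_at k t"

definition closed :: "trm \<Rightarrow> bool" where
  "closed t = closed_at 0 t"

definition is_val :: "trm \<Rightarrow> bool" where
  "is_val t = (\<exists>b. t = Lam b)"

definition is_prog :: "trm \<Rightarrow> bool" where
  "is_prog t = (\<exists>b. t = Reset b)"

fun lift :: "nat \<Rightarrow> trm \<Rightarrow> trm" where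
  "lift k (Var n) = (if n < k then Var n else Var (Suc n))"
| "lift k (Lam t) = Lam (lift (Suc k) t)"
| "lift k (App s t) = App (lift k s) (lift k t)"
| "lift k (Shift t) = Shift (lift (Suc k) t)"
| "lift k (Reset t) = Reset (lift k t)"

fun subst :: "nat \<Rightarrow> trm \<Rightarrow> trm \<Rightarrow> trm" where
  "subst k s (Var n) = (if n < k then Var n else if n = k then s else Var (n - 1))"
| "subst k s (Lam t) = Lam (subst (Suc k) (lift 0 s) t)"
| "subst k s (App t u) = App (subst k s t) (subst k s u)"
| "subst k s (Shift t) = Shift (subst (Suc k) (lift 0 s) t)"
| "subst k s (Reset t) = Reset (subst k s t)"

datatype ctx = Hole | CLam ctx | CAppR trm ctx | CAppL ctx trm | CShift ctx | CReset ctx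

fun plug :: "ctx \<Rightarrow> trm \<Rightarrow> trm" where
  "plug Hole t = t"
| "plug (CLam C) t = Lam (plug C t)"
| "plug (CAppR s C) t = App s (plug C t)"
| "plug (CAppL C s) t = App (plug C t) s"
| "plug (CShift C) t = Shift (plug C t)"
| "plug (CReset C) t = Reset (plug C t)"

fun ctx_lift :: "nat \<Rightarrow> ctx \<Rightarrow> ctx" where
  "ctx_lift k Hole = Hole"
| "ctx_lift k (CLam C) = CLam (ctx_lift (Suc k) C)"
| "ctx_lift k (CAppR s C) = CAppR (lift k s) (ctx_lift k C)"
| "ctx_lift k (CAppL C s) = CAppL (ctx_lift k C) (lift k s)"
| "ctx_lift k (CShift C) = CShift (ctx_lift (Suc k) C)"
| "ctx_lift k (CReset C) = CReset (ctx_lift k C)"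

fun pure_ctx :: "ctx \<Rightarrow> bool" where
  "pure_ctx Hole = True"
| "pure_ctx (CAppR v E) = (is_val v \<and> pure_ctx E)"
| "pure_ctx (CAppL E t) = pure_ctx E"
| "pure_ctx _ = False"

fun eval_ctx :: "ctx \<Rightarrow> bool" where
  "eval_ctx Hole = True"
| "eval_ctx (CAppR v F) = (is_val v \<and> eval_ctx F)"
| "eval_ctx (CAppL F t) = eval_ctx F"
| "eval_ctx (CReset F) = eval_ctx F"
| "eval_ctx _ = False"

inductive step :: "trm \<Rightarrow> trm \<Rightarrow> bool" where
  beta: "eval_ctx F \<Longrightarrow> is_val v \<Longrightarrow>
     step (plug F (App (Lam t) v)) (plug F (subst 0 v t))"
| shift: "eval_ctx F \<Longrightarrow> pure_ctx E \<Longrightarrow>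
     step (plug F (Reset (plug E (Shift t))))
          (plug F (Reset (subst 0 (Lam (Reset (plug (ctx_lift 0 E) (Var 0)))) t)))"
| reset: "eval_ctx F \<Longrightarrow> is_val v \<Longrightarrow>
     step (plug F (Reset v)) (plug F v)"

abbreviation steps :: "trm \<Rightarrow> trm \<Rightarrow> bool" where
  "steps \<equiv> step\<^sup>*\<^sup>*"

inductive tcomp :: "(trm \<times> trm) set \<Rightarrow> trm \<Rightarrow> trm \<Rightarrow> bool" for R where
  base: "(a, b) \<in> R \<Longrightarrow> tcomp R a b"
| var: "tcomp R (Var n) (Var n)"
| lam: "tcomp R a b \<Longrightarrow> tcomp R (Lam a) (Lam b)"
| app: "tcomp R a b \<Longrightarrow> tcomp R c d \<Longrightarrow> tcomp R (App a c) (App b d)"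
| shft: "tcomp R a b \<Longrightarrow> tcomp R (Shift a) (Shift b)"
| rst: "tcomp R a b \<Longrightarrow> tcomp R (Reset a) (Reset b)"

definition tclos :: "(trm \<times> trm) set \<Rightarrow> (trm \<times> trm) set" where
  "tclos R = {(a, b). tcomp R a b \<and> closed a \<and> closed b}"

inductive cclos :: "(trm \<times> trm) set \<Rightarrow> ctx \<Rightarrow> ctx \<Rightarrow> bool" for R where
  hole: "cclos R Hole Hole"
| arg: "cclos R F0 F1 \<Longrightarrow> is_val v0 \<Longrightarrow> is_val v1 \<Longrightarrow> (v0, v1) \<in> tclos R \<Longrightarrow>
     cclos R (CAppR v0 F0) (CAppR v1 F1)"
| fn: "cclos R F0 F1 \<Longrightarrow> (t0, t1) \<in> tclos R \<Longrightarrow> cclos R (CAppL F0 t0) (CAppL F1 t1)"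
| rst: "cclos R F0 F1 \<Longrightarrow> cclos R (CReset F0) (CReset F1)"

type_synonym env = "(trm \<times> trm) set"
type_synonym envrel = "env set \<times> (env \<times> trm \<times> trm) set"

definition is_env :: "env \<Rightarrow> bool" where
  "is_env E = (\<forall>(v0, v1)\<in>E. closed v0 \<and> is_val v0 \<and> closed v1 \<and> is_val v1)"

definition env_relation :: "envrel \<Rightarrow> bool" where
  "env_relation X = ((\<forall>E\<in>fst X. is_env E) \<and>
     (\<forall>(E, t0, t1)\<in>snd X. is_env E \<and> closed t0 \<and> closed t1))"

definition env_bisim :: "envrel \<Rightarrow> bool" where
  "env_bisim X = (env_relation X \<and>
    \<comment> \<open>(1)\<close>
    (\<forall>E t0 t1. (E, t0, t1) \<in> snd X \<longrightarrow> \<not> (is_prog t0 \<and> is_prog t1) \<longrightarrow>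
       (\<forall>E0 E1. pure_ctx E0 \<and> pure_ctx E1 \<and> cclos E E0 E1 \<longrightarrow>
          (E, Reset (plug E0 t0), Reset (plug E1 t1)) \<in> snd X)) \<and>
    \<comment> \<open>(2)\<close>
    (\<forall>E p0 p1. (E, p0, p1) \<in> snd X \<longrightarrow> is_prog p0 \<longrightarrow> is_prog p1 \<longrightarrow>
       (\<forall>p0'. step p0 p0' \<longrightarrow> is_prog p0' \<longrightarrow>
          (\<exists>p1'. steps p1 p1' \<and> is_prog p1' \<and> (E, p0', p1') \<in> snd X)) \<and>
       (\<forall>v0. step p0 v0 \<longrightarrow> is_val v0 \<longrightarrow>
          (\<exists>v1. steps p1 v1 \<and> is_val v1 \<and> {(v0, v1)} \<union> E \<in> fst X)) \<and>
       (\<forall>p1'. step p1 p1' \<longrightarrow> is_prog p1' \<longrightarrow>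
          (\<exists>p0'. steps p0 p0' \<and> is_prog p0' \<and> (E, p0', p1') \<in> snd X)) \<and>
       (\<forall>v1. step p1 v1 \<longrightarrow> is_val v1 \<longrightarrow>
          (\<exists>v0. steps p0 v0 \<and> is_val v0 \<and> {(v0, v1)} \<union> E \<in> fst X))) \<and>
    \<comment> \<open>(3)\<close>
    (\<forall>E\<in>fst X. \<forall>t0 t1 v0 v1. (Lam t0, Lam t1) \<in> E \<longrightarrow> (v0, v1) \<in> tclos E \<longrightarrow>
       is_val v0 \<longrightarrow> is_val v1 \<longrightarrow>
       (E, subst 0 v0 t0, subst 0 v1 t1) \<in> snd X))"

definition bisim_p :: "env \<Rightarrow> trm \<Rightarrow> trm \<Rightarrow> bool" where
  "bisim_p E t0 t1 = (\<exists>X. env_bisim X \<and> (E, t0, t1) \<in> snd X)"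

end

theory Submission
  imports Defs
begin

lemma closed_at_mono: "closed_at k t \<Longrightarrow> k \<le> j \<Longrightarrow> closed_at j t"
  by (induction t arbitrary: k j) auto

lemma lift_closed: "closed_at k t \<Longrightarrow> lift k t = t"
  by (induction t arbitrary: k) auto

lemma subst_closed: "closed_at k t \<Longrightarrow> subst k s t = t"
  by (induction t arbitrary: k s) auto

lemma closed_lift: "closed_at k s \<Longrightarrow> closed_at (Suc k) (lift j s)"
  by (induction s arbitrary: k j) auto

lemma closed_subst: "closed_at (Suc k) t \<Longrightarrow> closed_at k s \<Longrightarrow> closed_at k (subst k s t)"
proof (induction t arbitrary: k s)
  case (Lam t)
  then show ?case using closed_lift by auto
next
  case (Shift t)
  then show ?case using closed_lift by auto
qed auto

fun ccomp :: "ctx \<Rightarrow> ctx \<Rightarrow> ctx" where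
  "ccomp Hole B = B"
| "ccomp (CLam C) B = CLam (ccomp C B)"
| "ccomp (CAppR s C) B = CAppR s (ccomp C B)"
| "ccomp (CAppL C s) B = CAppL (ccomp C B) s"
| "ccomp (CShift C) B = CShift (ccomp C B)"
| "ccomp (CReset C) B = CReset (ccomp C B)"

lemma plug_comp[simp]: "plug (ccomp A B) t = plug A (plug B t)"
  by (induction A) auto

lemma eval_comp: "eval_ctx A \<Longrightarrow> eval_ctx B \<Longrightarrow> eval_ctx (ccomp A B)"
  by (induction A) auto

lemma eval_comp_D: "eval_ctx (ccomp A B) \<Longrightarrow> eval_ctx A \<and> eval_ctx B"
  by (induction A) auto

lemma pure_eval: "pure_ctx E \<Longrightarrow> eval_ctx E"
  by (induction E rule: pure_ctx.induct) auto

lemma plug_inj: "plug C a = plug C b \<Longrightarrow> a = b"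
  by (induction C) auto

lemma eval_plug_nonval: "eval_ctx F \<Longrightarrow> \<not> is_val X \<Longrightarrow> \<not> is_val (plug F X)"
  by (cases F) (auto simp: is_val_def)

lemma pure_plug_nonprog: "pure_ctx F \<Longrightarrow> \<not> is_prog X \<Longrightarrow> \<not> is_prog (plug F X)"
  by (cases F rule: pure_ctx.cases) (auto simp: is_prog_def)

lemma eval_plug_Lam: "eval_ctx F \<Longrightarrow> plug F X = Lam b \<Longrightarrow> F = Hole"
  by (cases F) auto

lemma eval_plug_Lam': "eval_ctx F \<Longrightarrow> Lam b = plug F X \<Longrightarrow> F = Hole"
  by (cases F) auto

lemma pure_plug_shift_Lam: "pure_ctx E \<Longrightarrow> plug E (Shift t) \<noteq> Lam b"
  by (cases E) auto

lemma eval_closed_sub: "eval_ctx F \<Longrightarrow> closed_at k (plug F X) \<Longrightarrow> closed_at k X"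
  by (induction F rule: eval_ctx.induct) auto

lemma eval_closed_rep: "eval_ctx F \<Longrightarrow> closed_at k (plug F X) \<Longrightarrow> closed_at k Y \<Longrightarrow> closed_at k (plug F Y)"
  by (induction F rule: eval_ctx.induct) auto

lemma pure_closed_lift: "pure_ctx E \<Longrightarrow> closed_at k (plug E X) \<Longrightarrow> closed_at (Suc k) Y \<Longrightarrow>
   closed_at (Suc k) (plug (ctx_lift j E) Y)"
  by (induction E rule: pure_ctx.induct) (auto simp: closed_lift)

lemma not_pure_decomp: "eval_ctx F \<Longrightarrow> \<not> pure_ctx F \<Longrightarrow>
   \<exists>Fo Ei. F = ccomp Fo (CReset Ei) \<and> eval_ctx Fo \<and> pure_ctx Ei"
proof (induction F)
  case (CAppR v G)
  then have "eval_ctx G" "\<not> pure_ctx G" by auto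
  then obtain Fo Ei where "G = ccomp Fo (CReset Ei) \<and> eval_ctx Fo \<and> pure_ctx Ei" using CAppR.IH by blast
  then show ?case using CAppR.prems by (intro exI[of _ "CAppR v Fo"] exI[of _ Ei]) auto
next
  case (CAppL G t)
  then have "eval_ctx G" "\<not> pure_ctx G" by auto
  then obtain Fo Ei where "G = ccomp Fo (CReset Ei) \<and> eval_ctx Fo \<and> pure_ctx Ei" using CAppL.IH by blast
  then show ?case using CAppL.prems by (intro exI[of _ "CAppL Fo t"] exI[of _ Ei]) auto
next
  case (CReset G)
  show ?case
  proof (cases "pure_ctx G")
    case True
    then show ?thesis by (intro exI[of _ Hole] exI[of _ G]) auto
  next
    case False
    then obtain Fo Ei where "G = ccomp Fo (CReset Ei) \<and> eval_ctx Fo \<and> pure_ctx Ei" using CReset by auto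
    then show ?thesis by (intro exI[of _ "CReset Fo"] exI[of _ Ei]) auto
  qed
qed auto

lemma step_ctx: "step a b \<Longrightarrow> eval_ctx F \<Longrightarrow> step (plug F a) (plug F b)"
proof (induction rule: step.induct)
  case (beta G v t)
  then show ?case using step.beta[of "ccomp F G" v t] eval_comp by auto
next
  case (shift G E t)
  then show ?case using step.shift[of "ccomp F G" E t] eval_comp by auto
next
  case (reset G v)
  then show ?case using step.reset[of "ccomp F G" v] eval_comp by auto
qed

lemma steps_ctx: "steps a b \<Longrightarrow> eval_ctx F \<Longrightarrow> steps (plug F a) (plug F b)"
  by (induction rule: rtranclp_induct) (auto intro: rtranclp.rtrancl_into_rtrancl step_ctx)

lemma step_closed: "step a b \<Longrightarrow> closed a \<Longrightarrow> closed b"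
  unfolding closed_def
proof (induction rule: step.induct)
  case (beta F v t)
  have "closed_at 0 (App (Lam t) v)" using eval_closed_sub[OF beta(1) beta(3)] .
  then have "closed_at 0 (subst 0 v t)" using closed_subst by auto
  then show ?case using eval_closed_rep[OF beta(1) beta(3)] by simp
next
  case (shift F E t)
  have c: "closed_at 0 (Reset (plug E (Shift t)))" using eval_closed_sub[OF shift(1) shift(3)] .
  then have "closed_at 1 (plug (ctx_lift 0 E) (Var 0))"
    using pure_closed_lift[OF shift(2), of 0 "Shift t" "Var 0" 0] by auto
  then have "closed_at 0 (Lam (Reset (plug (ctx_lift 0 E) (Var 0))))" by auto
  moreover have "closed_at 1 t" using c eval_closed_sub[OF pure_eval[OF shift(2)], of 0 "Shift t"] by auto
  ultimately have "closed_at 0 (Reset (subst 0 (Lam (Reset (plug (ctx_lift 0 E) (Var 0)))) t))"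
    using closed_subst by auto
  then show ?case using eval_closed_rep[OF shift(1) shift(3)] by simp
next
  case (reset F v)
  have "closed_at 0 (Reset v)" using eval_closed_sub[OF reset(1) reset(3)] .
  then show ?case using eval_closed_rep[OF reset(1) reset(3)] by simp
qed

lemma decomp: "eval_ctx F \<Longrightarrow> eval_ctx F2 \<Longrightarrow> plug F p = plug F2 R \<Longrightarrow> \<not> is_val p \<Longrightarrow> \<not> is_val R \<Longrightarrow>
  (\<exists>F3. F2 = ccomp F F3) \<or> (\<exists>F4. F = ccomp F2 F4 \<and> F4 \<noteq> Hole)"
proof (induction F arbitrary: F2)
  case Hole
  then show ?case by auto
next
  case (CAppR v G)
  show ?case
  proof (cases F2)
    case Hole then show ?thesis by auto
  next
    case (CAppR v2 G2)
    with CAppR.prems have "plug G p = plug G2 R" "eval_ctx G" "eval_ctx G2" by auto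
    with CAppR.IH CAppR.prems CAppR(1) have "(\<exists>F3. G2 = ccomp G F3) \<or> (\<exists>F4. G = ccomp G2 F4 \<and> F4 \<noteq> Hole)" by auto
    then show ?thesis using CAppR.prems \<open>F2 = _\<close> by auto
  next
    case (CAppL G2 s)
    with CAppR.prems have "v = plug G2 R" "is_val v" "eval_ctx G2" by auto
    then show ?thesis using eval_plug_nonval CAppR.prems by metis
  qed (use CAppR in auto)
next
  case (CAppL G t)
  show ?case
  proof (cases F2)
    case Hole then show ?thesis by auto
  next
    case (CAppL G2 s)
    with CAppL.prems have "plug G p = plug G2 R" "eval_ctx G" "eval_ctx G2" by auto
    with CAppL.IH CAppL.prems have "(\<exists>F3. G2 = ccomp G F3) \<or> (\<exists>F4. G = ccomp G2 F4 \<and> F4 \<noteq> Hole)" by auto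
    then show ?thesis using CAppL.prems \<open>F2 = _\<close> by auto
  next
    case (CAppR v2 G2)
    with CAppL.prems have "v2 = plug G p" "is_val v2" "eval_ctx G" by auto
    then show ?thesis using eval_plug_nonval CAppL.prems by metis
  qed (use CAppL in auto)
next
  case (CReset G)
  show ?case
  proof (cases F2)
    case Hole then show ?thesis by auto
  next
    case (CReset G2)
    with CReset.prems have "plug G p = plug G2 R" "eval_ctx G" "eval_ctx G2" by auto
    with CReset.IH CReset.prems have "(\<exists>F3. G2 = ccomp G F3) \<or> (\<exists>F4. G = ccomp G2 F4 \<and> F4 \<noteq> Hole)" by auto
    then show ?thesis using CReset.prems \<open>F2 = _\<close> by auto
  qed (use CReset in auto)
qed auto

lemma eval_nonhole_shape: "eval_ctx F \<Longrightarrow> F \<noteq> Hole \<Longrightarrow> (\<exists>a b. plug F X = App a b) \<or> (\<exists>a. plug F X = Reset a)"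
  by (cases F) auto

lemma pure_nonhole_shape: "pure_ctx F \<Longrightarrow> F \<noteq> Hole \<Longrightarrow> (\<exists>a b. plug F X = App a b)"
  by (cases F) auto

lemma plug_pure_shift_prog: "eval_ctx G \<Longrightarrow> pure_ctx E \<Longrightarrow> is_prog p \<Longrightarrow> plug G p \<noteq> plug E (Shift t)"
proof
  assume G: "eval_ctx G" and E: "pure_ctx E" and p: "is_prog p" and eq: "plug G p = plug E (Shift t)"
  have "\<not> is_val p" using p by (auto simp: is_prog_def is_val_def)
  moreover have "\<not> is_val (Shift t)" by (auto simp: is_val_def)
  ultimately have "(\<exists>F3. E = ccomp G F3) \<or> (\<exists>F4. G = ccomp E F4 \<and> F4 \<noteq> Hole)"
    using decomp[OF G pure_eval[OF E] eq] by auto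
  then show False
  proof
    assume "\<exists>F3. E = ccomp G F3"
    then obtain F3 where F3: "E = ccomp G F3" by auto
    then have "p = plug F3 (Shift t)" using eq plug_inj by (metis plug_comp)
    moreover have "pure_ctx F3" using E F3 by (induction G arbitrary: E) auto
    ultimately show False using p pure_plug_nonprog[of F3 "Shift t"] by (auto simp: is_prog_def)
  next
    assume "\<exists>F4. G = ccomp E F4 \<and> F4 \<noteq> Hole"
    then obtain F4 where F4: "G = ccomp E F4" "F4 \<noteq> Hole" by auto
    then have "Shift t = plug F4 p" using eq plug_inj by (metis plug_comp)
    moreover have "eval_ctx F4" using G F4 eval_comp_D by blast
    ultimately show False using eval_nonhole_shape[OF _ F4(2), of p] by auto
  qed
qed

lemma step_in_ctx: "step r s \<Longrightarrow> r = plug F p \<Longrightarrow> eval_ctx F \<Longrightarrow> is_prog p \<Longrightarrow>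
   \<exists>p'. step p p' \<and> s = plug F p'"
proof (induction rule: step.induct)
  case (beta F2 v t)
  have nv: "\<not> is_val p" "\<not> is_val (App (Lam t) v)" using beta by (auto simp: is_prog_def is_val_def)
  from decomp[OF beta(4) beta(1) beta(3)[symmetric] nv]
  show ?case
  proof
    assume "\<exists>F3. F2 = ccomp F F3"
    then obtain F3 where F3: "F2 = ccomp F F3" by auto
    then have "p = plug F3 (App (Lam t) v)" using beta(3) plug_inj by (metis plug_comp)
    moreover have "eval_ctx F3" using beta(1) F3 eval_comp_D by blast
    ultimately show ?thesis using F3 step.beta[of F3 v t] beta by auto
  next
    assume "\<exists>F4. F = ccomp F2 F4 \<and> F4 \<noteq> Hole"
    then obtain F4 where F4: "F = ccomp F2 F4" "F4 \<noteq> Hole" by auto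
    then have eq: "App (Lam t) v = plug F4 p" using beta(3) plug_inj by (metis plug_comp)
    have "eval_ctx F4" using beta(4) F4 eval_comp_D by blast
    then show ?thesis using eq F4(2) beta(2,5)
      by (cases F4) (auto simp: is_prog_def is_val_def dest: eval_plug_Lam eval_plug_Lam')
  qed
next
  case (shift F2 E t)
  have nv: "\<not> is_val p" "\<not> is_val (Reset (plug E (Shift t)))" using shift by (auto simp: is_prog_def is_val_def)
  from decomp[OF shift(4) shift(1) shift(3)[symmetric] nv]
  show ?case
  proof
    assume "\<exists>F3. F2 = ccomp F F3"
    then obtain F3 where F3: "F2 = ccomp F F3" by auto
    then have "p = plug F3 (Reset (plug E (Shift t)))" using shift(3) plug_inj by (metis plug_comp)
    moreover have "eval_ctx F3" using shift(1) F3 eval_comp_D by blast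
    ultimately show ?thesis using F3 step.shift[of F3 E t] shift by auto
  next
    assume "\<exists>F4. F = ccomp F2 F4 \<and> F4 \<noteq> Hole"
    then obtain F4 where F4: "F = ccomp F2 F4" "F4 \<noteq> Hole" by auto
    then have eq: "Reset (plug E (Shift t)) = plug F4 p" using shift(3) plug_inj by (metis plug_comp)
    have ev: "eval_ctx F4" using shift(4) F4 eval_comp_D by blast
    then show ?thesis using eq F4(2) shift(2,5) plug_pure_shift_prog[of _ E p t]
      by (cases F4) (auto simp: eq_commute)
  qed
next
  case (reset F2 v)
  have nv: "\<not> is_val p" "\<not> is_val (Reset v)" using reset by (auto simp: is_prog_def is_val_def)
  from decomp[OF reset(4) reset(1) reset(3)[symmetric] nv]
  show ?case
  proof
    assume "\<exists>F3. F2 = ccomp F F3"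
    then obtain F3 where F3: "F2 = ccomp F F3" by auto
    then have "p = plug F3 (Reset v)" using reset(3) plug_inj by (metis plug_comp)
    moreover have "eval_ctx F3" using reset(1) F3 eval_comp_D by blast
    ultimately show ?thesis using F3 step.reset[of F3 v] reset by auto
  next
    assume "\<exists>F4. F = ccomp F2 F4 \<and> F4 \<noteq> Hole"
    then obtain F4 where F4: "F = ccomp F2 F4" "F4 \<noteq> Hole" by auto
    then have eq: "Reset v = plug F4 p" using reset(3) plug_inj by (metis plug_comp)
    have "eval_ctx F4" using reset(4) F4 eval_comp_D by blast
    then show ?thesis using eq F4(2) reset(2,5)
      by (cases F4) (auto dest: eval_plug_Lam simp: is_prog_def is_val_def)
  qed
qed

lemma val_no_step: "step a b \<Longrightarrow> \<not> is_val a"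
  by (induction rule: step.induct) (auto simp: is_val_def dest: eval_plug_Lam)

lemma reset_hole: "eval_ctx F \<Longrightarrow> Reset v = plug F R \<Longrightarrow> is_val v \<Longrightarrow> \<not> is_val R \<Longrightarrow> F = Hole"
proof (cases F)
  case (CReset G)
  assume "eval_ctx F" "Reset v = plug F R" "is_val v" "\<not> is_val R"
  then show ?thesis using CReset eval_plug_nonval[of G R] by auto
qed auto

lemma reset_val_step: "step (Reset v) b \<Longrightarrow> is_val v \<Longrightarrow> b = v"
proof -
  assume s: "step (Reset v) b" and v: "is_val v"
  show ?thesis using s
  proof (cases rule: step.cases)
    case (beta F w t)
    then have "F = Hole" using reset_hole[of F v "App (Lam t) w"] v by (auto simp: is_val_def)
    then show ?thesis using beta by simp
  next
    case (shift F E t)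
    then have "F = Hole" using reset_hole[of F v "Reset (plug E (Shift t))"] v by (auto simp: is_val_def)
    then show ?thesis using shift v pure_plug_shift_Lam by (auto simp: is_val_def)
  next
    case (reset F w)
    then have "F = Hole" using reset_hole[of F v "Reset w"] v by (auto simp: is_val_def)
    then show ?thesis using reset by simp
  qed
qed

lemma prog_step_shape: "step p r \<Longrightarrow> is_prog p \<Longrightarrow> is_prog r \<or> is_val r"
proof (induction rule: step.induct)
  case (beta F v t)
  then show ?case by (cases F) (auto simp: is_prog_def)
next
  case (shift F E t)
  then show ?case by (cases F) (auto simp: is_prog_def)
next
  case (reset F v)
  then show ?case by (cases F) (auto simp: is_prog_def)
qed

lemma tcomp_refl: "tcomp H t t"
  by (induction t) (auto intro: tcomp.intros)

lemma env_val: "is_env H \<Longrightarrow> (a, b) \<in> H \<Longrightarrow> is_val a \<and> is_val b \<and> closed a \<and> closed b"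
  unfolding is_env_def by auto

lemma tcomp_val: "tcomp H a b \<Longrightarrow> is_env H \<Longrightarrow> is_val a \<Longrightarrow> is_val b"
  by (induction rule: tcomp.induct) (auto simp: is_val_def dest: env_val)

lemma tcomp_val2: "tcomp H a b \<Longrightarrow> is_env H \<Longrightarrow> is_val b \<Longrightarrow> is_val a"
  by (induction rule: tcomp.induct) (auto simp: is_val_def dest: env_val)

lemma tcomp_AppE: "tcomp H (App a c) T \<Longrightarrow> is_env H \<Longrightarrow> \<exists>b d. T = App b d \<and> tcomp H a b \<and> tcomp H c d"
  by (cases rule: tcomp.cases) (auto simp: is_val_def dest: env_val)

lemma tcomp_ResetE: "tcomp H (Reset a) T \<Longrightarrow> is_env H \<Longrightarrow> \<exists>b. T = Reset b \<and> tcomp H a b"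
  by (cases rule: tcomp.cases) (auto simp: is_val_def dest: env_val)

lemma tcomp_ShiftE: "tcomp H (Shift a) T \<Longrightarrow> is_env H \<Longrightarrow> \<exists>b. T = Shift b \<and> tcomp H a b"
  by (cases rule: tcomp.cases) (auto simp: is_val_def dest: env_val)

lemma tcomp_LamE: "tcomp H (Lam a) T \<Longrightarrow> (Lam a, T) \<in> H \<or> (\<exists>b. T = Lam b \<and> tcomp H a b)"
  by (cases rule: tcomp.cases) auto

lemma tcomp_lift: "tcomp H a b \<Longrightarrow> is_env H \<Longrightarrow> tcomp H (lift k a) (lift k b)"
proof (induction arbitrary: k rule: tcomp.induct)
  case (base a b)
  then have "closed_at k a" "closed_at k b" using env_val[OF base(2,1)] closed_at_mono
    by (auto simp: closed_def)
  then show ?case using base lift_closed by (auto intro: tcomp.base)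
qed (auto intro: tcomp.intros)

lemma tcomp_subst: "tcomp H a b \<Longrightarrow> is_env H \<Longrightarrow> tcomp H s s' \<Longrightarrow> tcomp H (subst k s a) (subst k s' b)"
proof (induction arbitrary: k s s' rule: tcomp.induct)
  case (base a b)
  then have "closed_at k a" "closed_at k b" using env_val[OF base(2,1)] closed_at_mono
    by (auto simp: closed_def)
  then show ?case using base subst_closed by (auto intro: tcomp.base)
next
  case (lam a b)
  then show ?case using tcomp_lift by (auto intro: tcomp.intros)
next
  case (shft a b)
  then show ?case using tcomp_lift by (auto intro: tcomp.intros)
qed (auto intro: tcomp.intros)

lemma tcomp_mono_tclos: "tcomp G a b \<Longrightarrow> G \<subseteq> tclos H \<Longrightarrow> tcomp H a b"
  by (induction rule: tcomp.induct) (auto simp: tclos_def intro: tcomp.intros)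

lemma tclos_mono: "G \<subseteq> tclos H \<Longrightarrow> tclos G \<subseteq> tclos H"
proof
  fix x assume "G \<subseteq> tclos H" "x \<in> tclos G"
  then show "x \<in> tclos H" using tcomp_mono_tclos[of G "fst x" "snd x" H] by (auto simp: tclos_def)
qed

lemma tcomp_sub: "tcomp G a b \<Longrightarrow> G \<subseteq> H \<Longrightarrow> tcomp H a b"
  by (induction rule: tcomp.induct) (auto intro: tcomp.intros)

lemma tclos_sub: "G \<subseteq> H \<Longrightarrow> tclos G \<subseteq> tclos H"
  unfolding tclos_def using tcomp_sub by blast

inductive ctcomp :: "(trm \<times> trm) set \<Rightarrow> ctx \<Rightarrow> ctx \<Rightarrow> bool" for H where
  hole: "ctcomp H Hole Hole"
| lam: "ctcomp H C C' \<Longrightarrow> ctcomp H (CLam C) (CLam C')"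
| appr: "tcomp H s s' \<Longrightarrow> ctcomp H C C' \<Longrightarrow> ctcomp H (CAppR s C) (CAppR s' C')"
| appl: "tcomp H s s' \<Longrightarrow> ctcomp H C C' \<Longrightarrow> ctcomp H (CAppL C s) (CAppL C' s')"
| shft: "ctcomp H C C' \<Longrightarrow> ctcomp H (CShift C) (CShift C')"
| rst: "ctcomp H C C' \<Longrightarrow> ctcomp H (CReset C) (CReset C')"

lemma ctcomp_plug: "ctcomp H C C' \<Longrightarrow> tcomp H t t' \<Longrightarrow> tcomp H (plug C t) (plug C' t')"
  by (induction rule: ctcomp.induct) (auto intro: tcomp.intros)

lemma ctcomp_lift: "ctcomp H C C' \<Longrightarrow> is_env H \<Longrightarrow> ctcomp H (ctx_lift k C) (ctx_lift k C')"
  by (induction arbitrary: k rule: ctcomp.induct) (auto intro: ctcomp.intros tcomp_lift)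

lemma ctcomp_eval: "ctcomp H C C' \<Longrightarrow> is_env H \<Longrightarrow> eval_ctx C \<Longrightarrow> eval_ctx C'"
  by (induction rule: ctcomp.induct) (auto dest: tcomp_val)

lemma ctcomp_pure: "ctcomp H C C' \<Longrightarrow> is_env H \<Longrightarrow> pure_ctx C \<Longrightarrow> pure_ctx C'"
  by (induction rule: ctcomp.induct) (auto dest: tcomp_val)

lemma ctcomp_comp: "ctcomp H (ccomp A B) C' \<Longrightarrow> \<exists>A' B'. C' = ccomp A' B' \<and> ctcomp H A A' \<and> ctcomp H B B'"
proof (induction A arbitrary: C')
  case Hole
  then show ?case by (intro exI[of _ Hole] exI[of _ C']) (auto intro: ctcomp.intros)
next
  case (CLam A)
  from CLam.prems obtain C where "C' = CLam C" "ctcomp H (ccomp A B) C" by (auto elim: ctcomp.cases)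
  with CLam.IH obtain A' B' where "C = ccomp A' B'" "ctcomp H A A'" "ctcomp H B B'" by blast
  then show ?case using \<open>C' = _\<close> by (intro exI[of _ "CLam A'"] exI[of _ B']) (auto intro: ctcomp.intros)
next
  case (CAppR s A)
  from CAppR.prems obtain C s' where "C' = CAppR s' C" "ctcomp H (ccomp A B) C" "tcomp H s s'" by (auto elim: ctcomp.cases)
  with CAppR.IH obtain A' B' where "C = ccomp A' B'" "ctcomp H A A'" "ctcomp H B B'" by blast
  then show ?case using \<open>C' = _\<close> \<open>tcomp H s s'\<close> by (intro exI[of _ "CAppR s' A'"] exI[of _ B']) (auto intro: ctcomp.intros)
next
  case (CAppL A s)
  from CAppL.prems obtain C s' where "C' = CAppL C s'" "ctcomp H (ccomp A B) C" "tcomp H s s'" by (auto elim: ctcomp.cases)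
  with CAppL.IH obtain A' B' where "C = ccomp A' B'" "ctcomp H A A'" "ctcomp H B B'" by blast
  then show ?case using \<open>C' = _\<close> \<open>tcomp H s s'\<close> by (intro exI[of _ "CAppL A' s'"] exI[of _ B']) (auto intro: ctcomp.intros)
next
  case (CShift A)
  from CShift.prems obtain C where "C' = CShift C" "ctcomp H (ccomp A B) C" by (auto elim: ctcomp.cases)
  with CShift.IH obtain A' B' where "C = ccomp A' B'" "ctcomp H A A'" "ctcomp H B B'" by blast
  then show ?case using \<open>C' = _\<close> by (intro exI[of _ "CShift A'"] exI[of _ B']) (auto intro: ctcomp.intros)
next
  case (CReset A)
  from CReset.prems obtain C where "C' = CReset C" "ctcomp H (ccomp A B) C" by (auto elim: ctcomp.cases)
  with CReset.IH obtain A' B' where "C = ccomp A' B'" "ctcomp H A A'" "ctcomp H B B'" by blast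
  then show ?case using \<open>C' = _\<close> by (intro exI[of _ "CReset A'"] exI[of _ B']) (auto intro: ctcomp.intros)
qed

lemma ctcomp_cclos: "ctcomp H F F' \<Longrightarrow> is_env H \<Longrightarrow> eval_ctx F \<Longrightarrow> closed (plug F a) \<Longrightarrow> closed (plug F' b) \<Longrightarrow> cclos H F F'"
proof (induction rule: ctcomp.induct)
  case hole
  then show ?case by (auto intro: cclos.intros)
next
  case (appr s s' C C')
  then show ?case using tcomp_val[OF appr(1)]
    by (auto simp: tclos_def closed_def intro!: cclos.intros)
next
  case (appl s s' C C')
  then show ?case by (auto simp: tclos_def closed_def intro!: cclos.intros)
next
  case (rst C C')
  then show ?case by (auto simp: closed_def intro!: cclos.intros)
qed auto

lemma tcomp_eval_decomp: "eval_ctx F \<Longrightarrow> is_env H \<Longrightarrow> tcomp H (plug F X) T \<Longrightarrow>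
  \<exists>F' X'. T = plug F' X' \<and> ctcomp H F F' \<and> tcomp H X X'"
proof (induction F arbitrary: T)
  case Hole
  then show ?case by (intro exI[of _ Hole]) (auto intro: ctcomp.intros)
next
  case (CAppR v G)
  from tcomp_AppE[of H v "plug G X" T] CAppR.prems obtain b d where
    bd: "T = App b d" "tcomp H v b" "tcomp H (plug G X) d" by auto
  with CAppR obtain F' X' where "d = plug F' X'" "ctcomp H G F'" "tcomp H X X'" by fastforce
  then show ?case using bd by (intro exI[of _ "CAppR b F'"] exI[of _ X']) (auto intro: ctcomp.intros)
next
  case (CAppL G t)
  from tcomp_AppE[of H "plug G X" t T] CAppL.prems obtain b d where
    bd: "T = App b d" "tcomp H (plug G X) b" "tcomp H t d" by auto
  with CAppL obtain F' X' where "b = plug F' X'" "ctcomp H G F'" "tcomp H X X'" by fastforce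
  then show ?case using bd by (intro exI[of _ "CAppL F' d"] exI[of _ X']) (auto intro: ctcomp.intros)
next
  case (CReset G)
  from tcomp_ResetE[of H "plug G X" T] CReset.prems obtain b where
    bd: "T = Reset b" "tcomp H (plug G X) b" by auto
  with CReset obtain F' X' where "b = plug F' X'" "ctcomp H G F'" "tcomp H X X'" by fastforce
  then show ?case using bd by (intro exI[of _ "CReset F'"] exI[of _ X']) (auto intro: ctcomp.intros)
qed auto

lemma cclos_ctcomp: "cclos H F F' \<Longrightarrow> ctcomp H F F'"
  by (induction rule: cclos.induct) (auto simp: tclos_def intro: ctcomp.intros)

lemma cclos_eval: "cclos H F F' \<Longrightarrow> eval_ctx F \<and> eval_ctx F'"
  by (induction rule: cclos.induct) auto

lemma cclos_closed: "cclos H F F' \<Longrightarrow> closed a \<Longrightarrow> closed b \<Longrightarrow> closed (plug F a) \<and> closed (plug F' b)"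
  by (induction rule: cclos.induct) (auto simp: tclos_def closed_def)

lemma cclos_comp: "cclos H A A' \<Longrightarrow> cclos H B B' \<Longrightarrow> cclos H (ccomp A B) (ccomp A' B')"
  by (induction rule: cclos.induct) (auto intro: cclos.intros)

lemma cclos_mono: "cclos G F F' \<Longrightarrow> tclos G \<subseteq> tclos H \<Longrightarrow> cclos H F F'"
  by (induction rule: cclos.induct) (auto intro: cclos.intros)

lemma cclos_prog: "cclos H F F' \<Longrightarrow> is_prog a \<Longrightarrow> is_prog b \<Longrightarrow> is_prog (plug F a) \<Longrightarrow> is_prog (plug F' b)"
  by (induction rule: cclos.induct) (auto simp: is_prog_def)

lemma eb_rel: "env_bisim X \<Longrightarrow> env_relation X"
  by (simp add: env_bisim_def)

lemma eb_c1: "env_bisim X \<Longrightarrow> (E, t0, t1) \<in> snd X \<Longrightarrow> \<not> (is_prog t0 \<and> is_prog t1) \<Longrightarrow>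
   pure_ctx E0 \<Longrightarrow> pure_ctx E1 \<Longrightarrow> cclos E E0 E1 \<Longrightarrow> (E, Reset (plug E0 t0), Reset (plug E1 t1)) \<in> snd X"
  unfolding env_bisim_def by meson

lemma eb_c2a: "env_bisim X \<Longrightarrow> (E, p0, p1) \<in> snd X \<Longrightarrow> is_prog p0 \<Longrightarrow> is_prog p1 \<Longrightarrow>
   step p0 p0' \<Longrightarrow> is_prog p0' \<Longrightarrow> \<exists>p1'. steps p1 p1' \<and> is_prog p1' \<and> (E, p0', p1') \<in> snd X"
  unfolding env_bisim_def by meson

lemma eb_c2b: "env_bisim X \<Longrightarrow> (E, p0, p1) \<in> snd X \<Longrightarrow> is_prog p0 \<Longrightarrow> is_prog p1 \<Longrightarrow>
   step p0 v0 \<Longrightarrow> is_val v0 \<Longrightarrow> \<exists>v1. steps p1 v1 \<and> is_val v1 \<and> {(v0, v1)} \<union> E \<in> fst X"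
  unfolding env_bisim_def by meson

lemma eb_c2c: "env_bisim X \<Longrightarrow> (E, p0, p1) \<in> snd X \<Longrightarrow> is_prog p0 \<Longrightarrow> is_prog p1 \<Longrightarrow>
   step p1 p1' \<Longrightarrow> is_prog p1' \<Longrightarrow> \<exists>p0'. steps p0 p0' \<and> is_prog p0' \<and> (E, p0', p1') \<in> snd X"
  unfolding env_bisim_def by meson

lemma eb_c2d: "env_bisim X \<Longrightarrow> (E, p0, p1) \<in> snd X \<Longrightarrow> is_prog p0 \<Longrightarrow> is_prog p1 \<Longrightarrow>
   step p1 v1 \<Longrightarrow> is_val v1 \<Longrightarrow> \<exists>v0. steps p0 v0 \<and> is_val v0 \<and> {(v0, v1)} \<union> E \<in> fst X"
  unfolding env_bisim_def by meson

lemma eb_c3: "env_bisim X \<Longrightarrow> E \<in> fst X \<Longrightarrow> (Lam t0, Lam t1) \<in> E \<Longrightarrow> (v0, v1) \<in> tclos E \<Longrightarrow>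
   is_val v0 \<Longrightarrow> is_val v1 \<Longrightarrow> (E, subst 0 v0 t0, subst 0 v1 t1) \<in> snd X"
  unfolding env_bisim_def by meson

definition conv :: "envrel \<Rightarrow> envrel" where
  "conv X = (converse ` fst X, (\<lambda>(E, a, b). (converse E, b, a)) ` snd X)"

lemma conv_snd: "(E, a, b) \<in> snd (conv X) \<longleftrightarrow> (converse E, b, a) \<in> snd X"
proof
  assume "(E, a, b) \<in> snd (conv X)"
  then show "(converse E, b, a) \<in> snd X" unfolding conv_def by auto
next
  assume "(converse E, b, a) \<in> snd X"
  then have "(\<lambda>(E, a, b). (converse E, b, a)) (converse E, b, a) \<in> (\<lambda>(E, a, b). (converse E, b, a)) ` snd X"
    by (rule imageI)
  then show "(E, a, b) \<in> snd (conv X)" unfolding conv_def by simp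
qed

lemma conv_fst: "E \<in> fst (conv X) \<longleftrightarrow> converse E \<in> fst X"
proof
  assume "E \<in> fst (conv X)"
  then show "converse E \<in> fst X" unfolding conv_def by auto
next
  assume "converse E \<in> fst X"
  then have "converse (converse E) \<in> converse ` fst X" by (rule imageI)
  then show "E \<in> fst (conv X)" unfolding conv_def by simp
qed

lemma tcomp_conv1: "tcomp H a b \<Longrightarrow> tcomp (converse H) b a"
  by (induction rule: tcomp.induct) (auto intro: tcomp.intros)

lemma tcomp_conv: "tcomp (converse H) a b \<longleftrightarrow> tcomp H b a"
  using tcomp_conv1[of H b a] tcomp_conv1[of "converse H" a b] by auto

lemma tclos_conv: "(a, b) \<in> tclos (converse H) \<longleftrightarrow> (b, a) \<in> tclos H"
  unfolding tclos_def using tcomp_conv by auto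

lemma cclos_conv1: "cclos H F0 F1 \<Longrightarrow> cclos (converse H) F1 F0"
  by (induction rule: cclos.induct) (auto intro: cclos.intros simp: tclos_conv)

lemma cclos_conv: "cclos (converse H) F0 F1 \<longleftrightarrow> cclos H F1 F0"
  using cclos_conv1[of H F1 F0] cclos_conv1[of "converse H" F0 F1] by auto

lemma is_env_conv: "is_env (converse E) \<longleftrightarrow> is_env E"
  unfolding is_env_def by auto

lemma ins_conv: "converse ({(a, b)} \<union> E) = {(b, a)} \<union> converse E"
  by auto

lemma ins_conv2[simp]: "converse (insert (a, b) E) = insert (b, a) (converse E)"
  by auto

lemma env_bisim_conv: assumes "env_bisim X" shows "env_bisim (conv X)"
proof -
  have R: "env_relation (conv X)"
    using eb_rel[OF assms] unfolding env_relation_def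
    apply (intro conjI)
    subgoal
    proof (intro ballI)
      fix x assume "x \<in> fst (conv X)" "(\<forall>E\<in>fst X. is_env E) \<and> (\<forall>(E, t0, t1)\<in>snd X. is_env E \<and> closed t0 \<and> closed t1)"
      then show "is_env x" using conv_fst[of x X] is_env_conv[of x] by auto
    qed
    subgoal
    proof (intro ballI)
      fix x assume "x \<in> snd (conv X)" "(\<forall>E\<in>fst X. is_env E) \<and> (\<forall>(E, t0, t1)\<in>snd X. is_env E \<and> closed t0 \<and> closed t1)"
      then show "case x of (E, t0, t1) \<Rightarrow> is_env E \<and> closed t0 \<and> closed t1"
        by (cases x) (auto simp: conv_snd is_env_conv)
    qed
    done
  have C1: "\<forall>E t0 t1. (E, t0, t1) \<in> snd (conv X) \<longrightarrow> \<not> (is_prog t0 \<and> is_prog t1) \<longrightarrow>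
       (\<forall>E0 E1. pure_ctx E0 \<and> pure_ctx E1 \<and> cclos E E0 E1 \<longrightarrow>
          (E, Reset (plug E0 t0), Reset (plug E1 t1)) \<in> snd (conv X))"
  proof (intro allI impI)
    fix E t0 t1 E0 E1
    assume "(E, t0, t1) \<in> snd (conv X)" "\<not> (is_prog t0 \<and> is_prog t1)"
      "pure_ctx E0 \<and> pure_ctx E1 \<and> cclos E E0 E1"
    then have "(converse E, t1, t0) \<in> snd X" "\<not> (is_prog t1 \<and> is_prog t0)" "pure_ctx E1 \<and> pure_ctx E0 \<and> cclos (converse E) E1 E0"
      by (auto simp: conv_snd cclos_conv)
    then have "(converse E, Reset (plug E1 t1), Reset (plug E0 t0)) \<in> snd X" using eb_c1[OF assms] by meson
    then show "(E, Reset (plug E0 t0), Reset (plug E1 t1)) \<in> snd (conv X)" by (simp add: conv_snd)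
  qed
  have C2: "\<forall>E p0 p1. (E, p0, p1) \<in> snd (conv X) \<longrightarrow> is_prog p0 \<longrightarrow> is_prog p1 \<longrightarrow>
       (\<forall>p0'. step p0 p0' \<longrightarrow> is_prog p0' \<longrightarrow>
          (\<exists>p1'. steps p1 p1' \<and> is_prog p1' \<and> (E, p0', p1') \<in> snd (conv X))) \<and>
       (\<forall>v0. step p0 v0 \<longrightarrow> is_val v0 \<longrightarrow>
          (\<exists>v1. steps p1 v1 \<and> is_val v1 \<and> {(v0, v1)} \<union> E \<in> fst (conv X))) \<and>
       (\<forall>p1'. step p1 p1' \<longrightarrow> is_prog p1' \<longrightarrow>
          (\<exists>p0'. steps p0 p0' \<and> is_prog p0' \<and> (E, p0', p1') \<in> snd (conv X))) \<and>
       (\<forall>v1. step p1 v1 \<longrightarrow> is_val v1 \<longrightarrow>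
          (\<exists>v0. steps p0 v0 \<and> is_val v0 \<and> {(v0, v1)} \<union> E \<in> fst (conv X)))"
  proof (intro allI impI)
    fix E p0 p1
    assume a: "(E, p0, p1) \<in> snd (conv X)" "is_prog p0" "is_prog p1"
    then have "(converse E, p1, p0) \<in> snd X" by (simp add: conv_snd)
    then have S: "(\<forall>p1'. step p1 p1' \<longrightarrow> is_prog p1' \<longrightarrow>
          (\<exists>p0'. steps p0 p0' \<and> is_prog p0' \<and> (converse E, p1', p0') \<in> snd X)) \<and>
       (\<forall>v1. step p1 v1 \<longrightarrow> is_val v1 \<longrightarrow>
          (\<exists>v0. steps p0 v0 \<and> is_val v0 \<and> {(v1, v0)} \<union> converse E \<in> fst X)) \<and>
       (\<forall>p0'. step p0 p0' \<longrightarrow> is_prog p0' \<longrightarrow>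
          (\<exists>p1'. steps p1 p1' \<and> is_prog p1' \<and> (converse E, p1', p0') \<in> snd X)) \<and>
       (\<forall>v0. step p0 v0 \<longrightarrow> is_val v0 \<longrightarrow>
          (\<exists>v1. steps p1 v1 \<and> is_val v1 \<and> {(v1, v0)} \<union> converse E \<in> fst X))"
      using eb_c2a[OF assms] eb_c2b[OF assms] eb_c2c[OF assms] eb_c2d[OF assms] \<open>(converse E, p1, p0) \<in> snd X\<close> a by meson
    have e: "{(v1, v0)} \<union> converse E \<in> fst X \<Longrightarrow> {(v0, v1)} \<union> E \<in> fst (conv X)" for v0 v1
      by (simp add: conv_fst)
    have s: "(converse E, b, a) \<in> snd X \<Longrightarrow> (E, a, b) \<in> snd (conv X)" for a b
      by (simp add: conv_snd)
    show "(\<forall>p0'. step p0 p0' \<longrightarrow> is_prog p0' \<longrightarrow>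
          (\<exists>p1'. steps p1 p1' \<and> is_prog p1' \<and> (E, p0', p1') \<in> snd (conv X))) \<and>
       (\<forall>v0. step p0 v0 \<longrightarrow> is_val v0 \<longrightarrow>
          (\<exists>v1. steps p1 v1 \<and> is_val v1 \<and> {(v0, v1)} \<union> E \<in> fst (conv X))) \<and>
       (\<forall>p1'. step p1 p1' \<longrightarrow> is_prog p1' \<longrightarrow>
          (\<exists>p0'. steps p0 p0' \<and> is_prog p0' \<and> (E, p0', p1') \<in> snd (conv X))) \<and>
       (\<forall>v1. step p1 v1 \<longrightarrow> is_val v1 \<longrightarrow>
          (\<exists>v0. steps p0 v0 \<and> is_val v0 \<and> {(v0, v1)} \<union> E \<in> fst (conv X)))"
    proof (intro conjI allI impI)
      fix p0' assume "step p0 p0'" "is_prog p0'"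
      then obtain p1' where "steps p1 p1'" "is_prog p1'" "(converse E, p1', p0') \<in> snd X" using S by blast
      then show "\<exists>p1'. steps p1 p1' \<and> is_prog p1' \<and> (E, p0', p1') \<in> snd (conv X)" using s by blast
    next
      fix v0 assume "step p0 v0" "is_val v0"
      then obtain v1 where "steps p1 v1" "is_val v1" "{(v1, v0)} \<union> converse E \<in> fst X" using S by blast
      then show "\<exists>v1. steps p1 v1 \<and> is_val v1 \<and> {(v0, v1)} \<union> E \<in> fst (conv X)" using e by blast
    next
      fix p1' assume "step p1 p1'" "is_prog p1'"
      then obtain p0' where "steps p0 p0'" "is_prog p0'" "(converse E, p1', p0') \<in> snd X" using S by blast
      then show "\<exists>p0'. steps p0 p0' \<and> is_prog p0' \<and> (E, p0', p1') \<in> snd (conv X)" using s by blast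
    next
      fix v1 assume "step p1 v1" "is_val v1"
      then obtain v0 where "steps p0 v0" "is_val v0" "{(v1, v0)} \<union> converse E \<in> fst X" using S by blast
      then show "\<exists>v0. steps p0 v0 \<and> is_val v0 \<and> {(v0, v1)} \<union> E \<in> fst (conv X)" using e by blast
    qed
  qed
  have C3: "\<forall>E\<in>fst (conv X). \<forall>t0 t1 v0 v1. (Lam t0, Lam t1) \<in> E \<longrightarrow> (v0, v1) \<in> tclos E \<longrightarrow>
       is_val v0 \<longrightarrow> is_val v1 \<longrightarrow>
       (E, subst 0 v0 t0, subst 0 v1 t1) \<in> snd (conv X)"
  proof (intro ballI allI impI)
    fix E t0 t1 v0 v1
    assume "E \<in> fst (conv X)" "(Lam t0, Lam t1) \<in> E" "(v0, v1) \<in> tclos E" "is_val v0" "is_val v1"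
    then have "converse E \<in> fst X" "(Lam t1, Lam t0) \<in> converse E" "(v1, v0) \<in> tclos (converse E)"
      by (auto simp: conv_fst tclos_conv)
    then have "(converse E, subst 0 v1 t1, subst 0 v0 t0) \<in> snd X" using eb_c3[OF assms] \<open>is_val v0\<close> \<open>is_val v1\<close> by meson
    then show "(E, subst 0 v0 t0, subst 0 v1 t1) \<in> snd (conv X)" by (simp add: conv_snd)
  qed
  show ?thesis unfolding env_bisim_def using R C1 C2 C3 by (intro conjI)
qed

definition fwd :: "envrel \<Rightarrow> bool" where
  "fwd X = (\<forall>E p0 p1. (E, p0, p1) \<in> snd X \<longrightarrow> is_prog p0 \<longrightarrow> is_prog p1 \<longrightarrow>
       (\<forall>p0'. step p0 p0' \<longrightarrow> is_prog p0' \<longrightarrow>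
          (\<exists>p1'. steps p1 p1' \<and> is_prog p1' \<and> (E, p0', p1') \<in> snd X)) \<and>
       (\<forall>v0. step p0 v0 \<longrightarrow> is_val v0 \<longrightarrow>
          (\<exists>v1. steps p1 v1 \<and> is_val v1 \<and> {(v0, v1)} \<union> E \<in> fst X)))"

lemma bisim_intro:
  assumes R: "env_relation X"
  and C1: "\<And>E t0 t1 E0 E1. (E, t0, t1) \<in> snd X \<Longrightarrow> \<not> (is_prog t0 \<and> is_prog t1) \<Longrightarrow>
       pure_ctx E0 \<Longrightarrow> pure_ctx E1 \<Longrightarrow> cclos E E0 E1 \<Longrightarrow>
          (E, Reset (plug E0 t0), Reset (plug E1 t1)) \<in> snd X"
  and F: "fwd X" and FC: "fwd (conv X)"
  and C3: "\<And>E t0 t1 v0 v1. E \<in> fst X \<Longrightarrow> (Lam t0, Lam t1) \<in> E \<Longrightarrow> (v0, v1) \<in> tclos E \<Longrightarrow>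
       is_val v0 \<Longrightarrow> is_val v1 \<Longrightarrow> (E, subst 0 v0 t0, subst 0 v1 t1) \<in> snd X"
  shows "env_bisim X"
proof -
  have C2: "\<forall>E p0 p1. (E, p0, p1) \<in> snd X \<longrightarrow> is_prog p0 \<longrightarrow> is_prog p1 \<longrightarrow>
       (\<forall>p1'. step p1 p1' \<longrightarrow> is_prog p1' \<longrightarrow>
          (\<exists>p0'. steps p0 p0' \<and> is_prog p0' \<and> (E, p0', p1') \<in> snd X)) \<and>
       (\<forall>v1. step p1 v1 \<longrightarrow> is_val v1 \<longrightarrow>
          (\<exists>v0. steps p0 v0 \<and> is_val v0 \<and> {(v0, v1)} \<union> E \<in> fst X))"
  proof (intro allI impI)
    fix E p0 p1 assume a: "(E, p0, p1) \<in> snd X" "is_prog p0" "is_prog p1"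
    then have "(converse E, p1, p0) \<in> snd (conv X)" by (simp add: conv_snd)
    then have S: "(\<forall>p1'. step p1 p1' \<longrightarrow> is_prog p1' \<longrightarrow>
          (\<exists>p0'. steps p0 p0' \<and> is_prog p0' \<and> (converse E, p1', p0') \<in> snd (conv X))) \<and>
       (\<forall>v1. step p1 v1 \<longrightarrow> is_val v1 \<longrightarrow>
          (\<exists>v0. steps p0 v0 \<and> is_val v0 \<and> {(v1, v0)} \<union> converse E \<in> fst (conv X)))"
      using FC a unfolding fwd_def by meson
    have e: "{(v1, v0)} \<union> converse E \<in> fst (conv X) \<Longrightarrow> {(v0, v1)} \<union> E \<in> fst X" for v0 v1
      by (simp add: conv_fst)
    have s: "(converse E, b, a) \<in> snd (conv X) \<Longrightarrow> (E, a, b) \<in> snd X" for a b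
      by (simp add: conv_snd)
    show "(\<forall>p1'. step p1 p1' \<longrightarrow> is_prog p1' \<longrightarrow>
          (\<exists>p0'. steps p0 p0' \<and> is_prog p0' \<and> (E, p0', p1') \<in> snd X)) \<and>
       (\<forall>v1. step p1 v1 \<longrightarrow> is_val v1 \<longrightarrow>
          (\<exists>v0. steps p0 v0 \<and> is_val v0 \<and> {(v0, v1)} \<union> E \<in> fst X))"
    proof (intro conjI allI impI)
      fix p1' assume "step p1 p1'" "is_prog p1'"
      then obtain p0' where "steps p0 p0'" "is_prog p0'" "(converse E, p1', p0') \<in> snd (conv X)" using S by blast
      then show "\<exists>p0'. steps p0 p0' \<and> is_prog p0' \<and> (E, p0', p1') \<in> snd X" using s by blast
    next
      fix v1 assume "step p1 v1" "is_val v1"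
      then obtain v0 where "steps p0 v0" "is_val v0" "{(v1, v0)} \<union> converse E \<in> fst (conv X)" using S by blast
      then show "\<exists>v0. steps p0 v0 \<and> is_val v0 \<and> {(v0, v1)} \<union> E \<in> fst X" using e by blast
    qed
  qed
  have C1': "\<forall>E t0 t1. (E, t0, t1) \<in> snd X \<longrightarrow> \<not> (is_prog t0 \<and> is_prog t1) \<longrightarrow>
       (\<forall>E0 E1. pure_ctx E0 \<and> pure_ctx E1 \<and> cclos E E0 E1 \<longrightarrow>
          (E, Reset (plug E0 t0), Reset (plug E1 t1)) \<in> snd X)" using C1 by blast
  have C3': "\<forall>E\<in>fst X. \<forall>t0 t1 v0 v1. (Lam t0, Lam t1) \<in> E \<longrightarrow> (v0, v1) \<in> tclos E \<longrightarrow>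
       is_val v0 \<longrightarrow> is_val v1 \<longrightarrow>
       (E, subst 0 v0 t0, subst 0 v1 t1) \<in> snd X" using C3 by blast
  have C2': "\<forall>E p0 p1. (E, p0, p1) \<in> snd X \<longrightarrow> is_prog p0 \<longrightarrow> is_prog p1 \<longrightarrow>
       (\<forall>p0'. step p0 p0' \<longrightarrow> is_prog p0' \<longrightarrow>
          (\<exists>p1'. steps p1 p1' \<and> is_prog p1' \<and> (E, p0', p1') \<in> snd X)) \<and>
       (\<forall>v0. step p0 v0 \<longrightarrow> is_val v0 \<longrightarrow>
          (\<exists>v1. steps p1 v1 \<and> is_val v1 \<and> {(v0, v1)} \<union> E \<in> fst X)) \<and>
       (\<forall>p1'. step p1 p1' \<longrightarrow> is_prog p1' \<longrightarrow>
          (\<exists>p0'. steps p0 p0' \<and> is_prog p0' \<and> (E, p0', p1') \<in> snd X)) \<and>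
       (\<forall>v1. step p1 v1 \<longrightarrow> is_val v1 \<longrightarrow>
          (\<exists>v0. steps p0 v0 \<and> is_val v0 \<and> {(v0, v1)} \<union> E \<in> fst X))"
  proof (intro allI impI)
    fix E p0 p1 assume a: "(E, p0, p1) \<in> snd X" "is_prog p0" "is_prog p1"
    have f: "(\<forall>p0'. step p0 p0' \<longrightarrow> is_prog p0' \<longrightarrow>
          (\<exists>p1'. steps p1 p1' \<and> is_prog p1' \<and> (E, p0', p1') \<in> snd X)) \<and>
       (\<forall>v0. step p0 v0 \<longrightarrow> is_val v0 \<longrightarrow>
          (\<exists>v1. steps p1 v1 \<and> is_val v1 \<and> {(v0, v1)} \<union> E \<in> fst X))"
      using F a unfolding fwd_def by meson
    have b: "(\<forall>p1'. step p1 p1' \<longrightarrow> is_prog p1' \<longrightarrow>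
          (\<exists>p0'. steps p0 p0' \<and> is_prog p0' \<and> (E, p0', p1') \<in> snd X)) \<and>
       (\<forall>v1. step p1 v1 \<longrightarrow> is_val v1 \<longrightarrow>
          (\<exists>v0. steps p0 v0 \<and> is_val v0 \<and> {(v0, v1)} \<union> E \<in> fst X))"
      using C2 a by meson
    show "(\<forall>p0'. step p0 p0' \<longrightarrow> is_prog p0' \<longrightarrow>
          (\<exists>p1'. steps p1 p1' \<and> is_prog p1' \<and> (E, p0', p1') \<in> snd X)) \<and>
       (\<forall>v0. step p0 v0 \<longrightarrow> is_val v0 \<longrightarrow>
          (\<exists>v1. steps p1 v1 \<and> is_val v1 \<and> {(v0, v1)} \<union> E \<in> fst X)) \<and>
       (\<forall>p1'. step p1 p1' \<longrightarrow> is_prog p1' \<longrightarrow>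
          (\<exists>p0'. steps p0 p0' \<and> is_prog p0' \<and> (E, p0', p1') \<in> snd X)) \<and>
       (\<forall>v1. step p1 v1 \<longrightarrow> is_val v1 \<longrightarrow>
          (\<exists>v0. steps p0 v0 \<and> is_val v0 \<and> {(v0, v1)} \<union> E \<in> fst X))"
      using f b by (intro conjI) (erule conjE, assumption)+
  qed
  show ?thesis unfolding env_bisim_def
    using R C1' C2' C3' by (intro conjI)
qed

definition Y1 :: "envrel \<Rightarrow> env \<Rightarrow> trm \<Rightarrow> trm \<Rightarrow> bool" where
  "Y1 X G t0 t1 = (\<exists>H\<in>fst X. G \<subseteq> tclos H \<and> tcomp H t0 t1 \<and> closed t0 \<and> closed t1)"

definition Y2 :: "envrel \<Rightarrow> env \<Rightarrow> trm \<Rightarrow> trm \<Rightarrow> bool" where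
  "Y2 X G t0 t1 = (\<exists>H F0 F1 p0 p1. t0 = plug F0 p0 \<and> t1 = plug F1 p1 \<and> G \<subseteq> tclos H \<and>
      cclos H F0 F1 \<and> (H, p0, p1) \<in> snd X \<and> is_prog p0 \<and> is_prog p1)"

definition Y3 :: "envrel \<Rightarrow> env \<Rightarrow> trm \<Rightarrow> trm \<Rightarrow> bool" where
  "Y3 X G t0 t1 = (\<exists>H. G \<subseteq> tclos H \<and> (H, t0, t1) \<in> snd X)"

definition Yrel :: "envrel \<Rightarrow> envrel" where
  "Yrel X = ({G. is_env G \<and> (\<exists>H\<in>fst X. G \<subseteq> tclos H)},
             {(G, t0, t1). is_env G \<and> (Y1 X G t0 t1 \<or> Y2 X G t0 t1 \<or> Y3 X G t0 t1)})"

lemma Yrel_fst: "G \<in> fst (Yrel X) \<longleftrightarrow> is_env G \<and> (\<exists>H\<in>fst X. G \<subseteq> tclos H)"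
  by (simp add: Yrel_def)

lemma Yrel_snd: "(G, t0, t1) \<in> snd (Yrel X) \<longleftrightarrow> is_env G \<and> (Y1 X G t0 t1 \<or> Y2 X G t0 t1 \<or> Y3 X G t0 t1)"
  by (simp add: Yrel_def)

lemma sub_tclos_conv: "G \<subseteq> tclos (converse H) \<longleftrightarrow> converse G \<subseteq> tclos H"
  using tclos_conv by auto

lemma sub_tclos_conv1: "G \<subseteq> tclos (converse H) \<Longrightarrow> converse G \<subseteq> tclos H"
  using sub_tclos_conv by blast

lemma sub_tclos_conv2: "converse G \<subseteq> tclos H \<Longrightarrow> G \<subseteq> tclos (converse H)"
  using sub_tclos_conv by blast

lemma sub_tclos_conv3: "G \<subseteq> tclos H \<Longrightarrow> converse G \<subseteq> tclos (converse H)"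
  using sub_tclos_conv[of "converse G" H] by simp

lemma Y1_conv: "Y1 (conv X) G t0 t1 \<longleftrightarrow> Y1 X (converse G) t1 t0"
proof
  assume "Y1 (conv X) G t0 t1"
  then obtain H where h: "H \<in> fst (conv X)" "G \<subseteq> tclos H" "tcomp H t0 t1" "closed t0" "closed t1"
    unfolding Y1_def by blast
  have "converse H \<in> fst X" using h(1) conv_fst by blast
  moreover have "converse G \<subseteq> tclos (converse H)" using sub_tclos_conv3[OF h(2)] .
  moreover have "tcomp (converse H) t1 t0" using h(3) tcomp_conv by blast
  ultimately show "Y1 X (converse G) t1 t0" unfolding Y1_def using h by blast
next
  assume "Y1 X (converse G) t1 t0"
  then obtain H where h: "H \<in> fst X" "converse G \<subseteq> tclos H" "tcomp H t1 t0" "closed t0" "closed t1"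
    unfolding Y1_def by blast
  have "converse H \<in> fst (conv X)" using h(1) conv_fst[of "converse H" X] by simp
  moreover have "G \<subseteq> tclos (converse H)" using sub_tclos_conv2[OF h(2)] .
  moreover have "tcomp (converse H) t0 t1" using h(3) tcomp_conv by blast
  ultimately show "Y1 (conv X) G t0 t1" unfolding Y1_def using h by blast
qed

lemma Y2_conv: "Y2 (conv X) G t0 t1 \<longleftrightarrow> Y2 X (converse G) t1 t0"
proof
  assume "Y2 (conv X) G t0 t1"
  then obtain H F0 F1 p0 p1 where h: "t0 = plug F0 p0" "t1 = plug F1 p1" "G \<subseteq> tclos H"
      "cclos H F0 F1" "(H, p0, p1) \<in> snd (conv X)" "is_prog p0" "is_prog p1"
    unfolding Y2_def by blast
  have "converse G \<subseteq> tclos (converse H)" using sub_tclos_conv3[OF h(3)] .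
  moreover have "cclos (converse H) F1 F0" using h(4) cclos_conv by blast
  moreover have "(converse H, p1, p0) \<in> snd X" using h(5) conv_snd by blast
  ultimately show "Y2 X (converse G) t1 t0" unfolding Y2_def using h by blast
next
  assume "Y2 X (converse G) t1 t0"
  then obtain H F0 F1 p0 p1 where h: "t1 = plug F0 p0" "t0 = plug F1 p1" "converse G \<subseteq> tclos H"
      "cclos H F0 F1" "(H, p0, p1) \<in> snd X" "is_prog p0" "is_prog p1"
    unfolding Y2_def by blast
  have "G \<subseteq> tclos (converse H)" using sub_tclos_conv2[OF h(3)] .
  moreover have "cclos (converse H) F1 F0" using h(4) cclos_conv by blast
  moreover have "(converse H, p1, p0) \<in> snd (conv X)" using h(5) conv_snd[of "converse H" p1 p0 X] by simp
  ultimately show "Y2 (conv X) G t0 t1" unfolding Y2_def using h by blast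
qed

lemma Y3_conv: "Y3 (conv X) G t0 t1 \<longleftrightarrow> Y3 X (converse G) t1 t0"
proof
  assume "Y3 (conv X) G t0 t1"
  then obtain H where h: "G \<subseteq> tclos H" "(H, t0, t1) \<in> snd (conv X)" unfolding Y3_def by blast
  have "converse G \<subseteq> tclos (converse H)" using sub_tclos_conv3[OF h(1)] .
  moreover have "(converse H, t1, t0) \<in> snd X" using h(2) conv_snd by blast
  ultimately show "Y3 X (converse G) t1 t0" unfolding Y3_def by blast
next
  assume "Y3 X (converse G) t1 t0"
  then obtain H where h: "converse G \<subseteq> tclos H" "(H, t1, t0) \<in> snd X" unfolding Y3_def by blast
  have "G \<subseteq> tclos (converse H)" using sub_tclos_conv2[OF h(1)] .
  moreover have "(converse H, t0, t1) \<in> snd (conv X)" using h(2) conv_snd[of "converse H" t0 t1 X] by simp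
  ultimately show "Y3 (conv X) G t0 t1" unfolding Y3_def by blast
qed

lemma Yrel_conv: "conv (Yrel X) = Yrel (conv X)"
proof -
  have f: "fst (conv (Yrel X)) = fst (Yrel (conv X))"
  proof (rule set_eqI)
    fix G
    show "G \<in> fst (conv (Yrel X)) \<longleftrightarrow> G \<in> fst (Yrel (conv X))"
    proof
      assume "G \<in> fst (conv (Yrel X))"
      then have "converse G \<in> fst (Yrel X)" by (simp only: conv_fst)
      then have "is_env (converse G)" and "\<exists>H\<in>fst X. converse G \<subseteq> tclos H" by (simp_all only: Yrel_fst)
      then obtain H where h: "is_env G" "H \<in> fst X" "converse G \<subseteq> tclos H"
        by (auto simp only: is_env_conv)
      have "converse H \<in> fst (conv X)" using h(2) conv_fst[of "converse H" X] by simp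
      moreover have "G \<subseteq> tclos (converse H)" using sub_tclos_conv2[OF h(3)] .
      ultimately show "G \<in> fst (Yrel (conv X))" using h(1) unfolding Yrel_fst by blast
    next
      assume "G \<in> fst (Yrel (conv X))"
      then have "is_env G" and "\<exists>H\<in>fst (conv X). G \<subseteq> tclos H" by (simp_all only: Yrel_fst)
      then obtain H where h: "is_env G" "H \<in> fst (conv X)" "G \<subseteq> tclos H" by blast
      have "converse H \<in> fst X" using h(2) by (simp only: conv_fst)
      moreover have "converse G \<subseteq> tclos (converse H)" using sub_tclos_conv3[OF h(3)] .
      moreover have "is_env (converse G)" using h(1) by (simp only: is_env_conv)
      ultimately have "converse G \<in> fst (Yrel X)" unfolding Yrel_fst by blast
      then show "G \<in> fst (conv (Yrel X))" by (simp only: conv_fst)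
    qed
  qed
  have s: "snd (conv (Yrel X)) = snd (Yrel (conv X))"
  proof (rule set_eqI)
    fix x :: "env \<times> trm \<times> trm"
    obtain G t0 t1 where x: "x = (G, t0, t1)" by (cases x) auto
    show "x \<in> snd (conv (Yrel X)) \<longleftrightarrow> x \<in> snd (Yrel (conv X))"
      unfolding x conv_snd Yrel_snd Y1_conv Y2_conv Y3_conv is_env_conv by (simp only: converse_converse)
  qed
  show ?thesis using f s by (simp only: prod_eq_iff)
qed

lemma eb_env_fst: "env_bisim X \<Longrightarrow> H \<in> fst X \<Longrightarrow> is_env H"
  using eb_rel unfolding env_relation_def by blast

lemma eb_env_snd: "env_bisim X \<Longrightarrow> (H, a, b) \<in> snd X \<Longrightarrow> is_env H \<and> closed a \<and> closed b"
  using eb_rel unfolding env_relation_def by fast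

lemma ctcomp_ResetE: "ctcomp H (CReset C) C' \<Longrightarrow> \<exists>D. C' = CReset D \<and> ctcomp H C D"
  by (cases rule: ctcomp.cases) auto

lemma Y1_step:
  assumes XB: "env_bisim X" and HX: "H \<in> fst X" and T: "tcomp H t0 t1"
    and c0: "closed t0" and c1: "closed t1" and p: "is_prog t0" and st: "step t0 r0"
  shows "\<exists>r1. step t1 r1 \<and> ((tcomp H r0 r1 \<and> closed r0 \<and> closed r1) \<or>
     (\<exists>F0 F1 q0 q1. r0 = plug F0 q0 \<and> r1 = plug F1 q1 \<and> cclos H F0 F1 \<and> (H, q0, q1) \<in> snd X \<and> is_prog q0 \<and> is_prog q1))"
proof -
  have env: "is_env H" using eb_env_fst[OF XB HX] .
  show ?thesis using st
  proof (cases rule: step.cases)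
    case (beta F w b)
    note t0 = beta(1) and r0 = beta(2) and evF = beta(3) and vw = beta(4)
    obtain F' X' where d: "t1 = plug F' X'" "ctcomp H F F'" "tcomp H (App (Lam b) w) X'"
      using tcomp_eval_decomp[OF evF env] T t0 by blast
    obtain u w' where d2: "X' = App u w'" "tcomp H (Lam b) u" "tcomp H w w'"
      using tcomp_AppE[OF d(3) env] by blast
    have vw': "is_val w'" using tcomp_val[OF d2(3) env vw] .
    have evF': "eval_ctx F'" using ctcomp_eval[OF d(2) env evF] .
    have cw: "closed w" using eval_closed_sub[OF evF, of 0 "App (Lam b) w"] c0 t0 by (simp add: closed_def)
    have cw': "closed w'" using eval_closed_sub[OF evF', of 0 "App u w'"] c1 d d2 by (simp add: closed_def)
    from tcomp_LamE[OF d2(2)] show ?thesis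
    proof
      assume bH: "(Lam b, u) \<in> H"
      then obtain b1 where u: "u = Lam b1" using env_val[OF env bH] by (auto simp: is_val_def)
      let ?r1 = "plug F' (subst 0 w' b1)"
      have s1: "step t1 ?r1" using step.beta[OF evF' vw', of b1] d d2 u by simp
      have wt: "(w, w') \<in> tclos H" using d2(3) cw cw' by (simp add: tclos_def)
      have SX: "(H, subst 0 w b, subst 0 w' b1) \<in> snd X"
        using eb_c3[OF XB HX _ wt vw vw'] bH u by simp
      have ccF: "cclos H F F'" using ctcomp_cclos[OF d(2) env evF] c0 c1 t0 d by simp
      have np: "\<not> pure_ctx F"
      proof
        assume "pure_ctx F"
        then have "\<not> is_prog (plug F (App (Lam b) w))" using pure_plug_nonprog[of F "App (Lam b) w"]
          by (simp add: is_prog_def)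
        then show False using p t0 by simp
      qed
      show ?thesis
      proof (cases "is_prog (subst 0 w b) \<and> is_prog (subst 0 w' b1)")
        case True
        then show ?thesis using s1 r0 ccF SX by blast
      next
        case False
        obtain Fo Ei where dec: "F = ccomp Fo (CReset Ei)" "eval_ctx Fo" "pure_ctx Ei"
          using not_pure_decomp[OF evF np] by blast
        obtain Fo' B' where dec': "F' = ccomp Fo' B'" "ctcomp H Fo Fo'" "ctcomp H (CReset Ei) B'"
          using ctcomp_comp[of H Fo "CReset Ei" F'] d(2) dec(1) by blast
        obtain Ei' where Ei': "B' = CReset Ei'" "ctcomp H Ei Ei'" using ctcomp_ResetE[OF dec'(3)] by blast
        have pEi': "pure_ctx Ei'" using ctcomp_pure[OF Ei'(2) env dec(3)] .
        have ccFo: "cclos H Fo Fo'"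
          using ctcomp_cclos[OF dec'(2) env dec(2), of "Reset (plug Ei (App (Lam b) w))" "Reset (plug Ei' (App u w'))"]
            c0 c1 t0 d d2 dec dec' Ei' by simp
        have evFo': "eval_ctx Fo'" using ctcomp_eval[OF dec'(2) env dec(2)] .
        have ca: "closed_at 0 (Reset (plug Ei (App (Lam b) w)))"
          using eval_closed_sub[OF dec(2), of 0 "Reset (plug Ei (App (Lam b) w))"] c0 t0 dec by (simp add: closed_def)
        have cb: "closed_at 0 (Reset (plug Ei' (App u w')))"
          using eval_closed_sub[OF evFo', of 0 "Reset (plug Ei' (App u w'))"] c1 d d2 dec' Ei' by (simp add: closed_def)
        have ccEi: "cclos H Ei Ei'"
          using ctcomp_cclos[OF Ei'(2) env pure_eval[OF dec(3)], of "App (Lam b) w" "App u w'"] ca cb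
          by (simp add: closed_def)
        have SX2: "(H, Reset (plug Ei (subst 0 w b)), Reset (plug Ei' (subst 0 w' b1))) \<in> snd X"
          using eb_c1[OF XB SX False dec(3) pEi' ccEi] .
        have "r0 = plug Fo (Reset (plug Ei (subst 0 w b)))" using r0 dec by simp
        moreover have "?r1 = plug Fo' (Reset (plug Ei' (subst 0 w' b1)))" using dec' Ei' by simp
        moreover have "is_prog (Reset (plug Ei (subst 0 w b)))" "is_prog (Reset (plug Ei' (subst 0 w' b1)))"
          by (simp_all add: is_prog_def)
        ultimately show ?thesis using s1 ccFo SX2 by metis
      qed
    next
      assume "\<exists>b'. u = Lam b' \<and> tcomp H b b'"
      then obtain b' where u: "u = Lam b'" "tcomp H b b'" by blast
      let ?r1 = "plug F' (subst 0 w' b')"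
      have s1: "step t1 ?r1" using step.beta[OF evF' vw', of b'] d d2 u by simp
      have "tcomp H r0 ?r1" using r0 ctcomp_plug[OF d(2) tcomp_subst[OF u(2) env d2(3)]] by simp
      moreover have "closed r0" using step_closed[OF st c0] .
      moreover have "closed ?r1" using step_closed[OF s1 c1] .
      ultimately show ?thesis using s1 by blast
    qed
  next
    case (shift F E b)
    note t0 = shift(1) and r0 = shift(2) and evF = shift(3) and pE = shift(4)
    obtain F' X' where d: "t1 = plug F' X'" "ctcomp H F F'" "tcomp H (Reset (plug E (Shift b))) X'"
      using tcomp_eval_decomp[OF evF env] T t0 by blast
    obtain Y' where d2: "X' = Reset Y'" "tcomp H (plug E (Shift b)) Y'"
      using tcomp_ResetE[OF d(3) env] by blast
    obtain E' Z' where d3: "Y' = plug E' Z'" "ctcomp H E E'" "tcomp H (Shift b) Z'"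
      using tcomp_eval_decomp[OF pure_eval[OF pE] env d2(2)] by blast
    obtain b' where d4: "Z' = Shift b'" "tcomp H b b'" using tcomp_ShiftE[OF d3(3) env] by blast
    have evF': "eval_ctx F'" using ctcomp_eval[OF d(2) env evF] .
    have pE': "pure_ctx E'" using ctcomp_pure[OF d3(2) env pE] .
    let ?r1 = "plug F' (Reset (subst 0 (Lam (Reset (plug (ctx_lift 0 E') (Var 0)))) b'))"
    have s1: "step t1 ?r1" using step.shift[OF evF' pE', of b'] d d2 d3 d4 by simp
    have "tcomp H (Lam (Reset (plug (ctx_lift 0 E) (Var 0)))) (Lam (Reset (plug (ctx_lift 0 E') (Var 0))))"
      using ctcomp_plug[OF ctcomp_lift[OF d3(2) env, of 0] tcomp.var[of H 0]] by (auto intro: tcomp.intros)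
    then have "tcomp H r0 ?r1" using r0 ctcomp_plug[OF d(2) tcomp.rst[OF tcomp_subst[OF d4(2) env]]] by simp
    moreover have "closed r0" using step_closed[OF st c0] .
    moreover have "closed ?r1" using step_closed[OF s1 c1] .
    ultimately show ?thesis using s1 by blast
  next
    case (reset F w)
    note t0 = reset(1) and r0 = reset(2) and evF = reset(3) and vw = reset(4)
    obtain F' X' where d: "t1 = plug F' X'" "ctcomp H F F'" "tcomp H (Reset w) X'"
      using tcomp_eval_decomp[OF evF env] T t0 by blast
    obtain w' where d2: "X' = Reset w'" "tcomp H w w'"
      using tcomp_ResetE[OF d(3) env] by blast
    have vw': "is_val w'" using tcomp_val[OF d2(2) env vw] .
    have evF': "eval_ctx F'" using ctcomp_eval[OF d(2) env evF] .
    let ?r1 = "plug F' w'"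
    have s1: "step t1 ?r1" using step.reset[OF evF' vw'] d d2 by simp
    have "tcomp H r0 ?r1" using r0 ctcomp_plug[OF d(2) d2(2)] by simp
    moreover have "closed r0" using step_closed[OF st c0] .
    moreover have "closed ?r1" using step_closed[OF s1 c1] .
    ultimately show ?thesis using s1 by blast
  qed
qed

lemma cclos_hole0: "cclos H F0 F1 \<Longrightarrow> F0 = Hole \<Longrightarrow> F1 = Hole"
  by (induction rule: cclos.induct) auto

lemma cclos_hole: "cclos H Hole F1 \<Longrightarrow> F1 = Hole"
  using cclos_hole0 by blast

lemma cclos_prog2: "cclos H F0 F1 \<Longrightarrow> is_prog (plug F0 a) \<Longrightarrow> \<not> is_prog a \<Longrightarrow> is_prog (plug F1 b)"
  by (induction rule: cclos.induct) (auto simp: is_prog_def)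

lemma prog_not_val: "is_prog p \<Longrightarrow> \<not> is_val p"
  by (auto simp: is_prog_def is_val_def)

lemma env_ins: "is_env H \<Longrightarrow> is_val a \<Longrightarrow> is_val b \<Longrightarrow> closed a \<Longrightarrow> closed b \<Longrightarrow> is_env ({(a, b)} \<union> H)"
  unfolding is_env_def by auto

lemma ins_tclos: "G \<subseteq> tclos H \<Longrightarrow> closed a \<Longrightarrow> closed b \<Longrightarrow> {(a, b)} \<union> G \<subseteq> tclos ({(a, b)} \<union> H)"
proof -
  assume a: "G \<subseteq> tclos H" "closed a" "closed b"
  have "tclos H \<subseteq> tclos ({(a, b)} \<union> H)" by (rule tclos_sub) blast
  moreover have "(a, b) \<in> tclos ({(a, b)} \<union> H)" using a by (auto simp: tclos_def intro: tcomp.base)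
  ultimately show ?thesis using a by blast
qed

lemma ins_tclos2: "G \<subseteq> tclos H \<Longrightarrow> tcomp H a b \<Longrightarrow> closed a \<Longrightarrow> closed b \<Longrightarrow> {(a, b)} \<union> G \<subseteq> tclos H"
  by (auto simp: tclos_def)

lemma Y_fwd: assumes XB: "env_bisim X" shows "fwd (Yrel X)"
  unfolding fwd_def
proof (intro allI impI)
  fix G p0 p1 assume m: "(G, p0, p1) \<in> snd (Yrel X)" and pp: "is_prog p0" "is_prog p1"
  then have envG: "is_env G" and cases: "Y1 X G p0 p1 \<or> Y2 X G p0 p1 \<or> Y3 X G p0 p1"
    by (simp_all add: Yrel_snd)
  {
    fix r0 assume st: "step p0 r0"
    have "(is_prog r0 \<longrightarrow> (\<exists>p1'. steps p1 p1' \<and> is_prog p1' \<and> (G, r0, p1') \<in> snd (Yrel X))) \<and>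
          (is_val r0 \<longrightarrow> (\<exists>v1. steps p1 v1 \<and> is_val v1 \<and> {(r0, v1)} \<union> G \<in> fst (Yrel X)))"
    using cases
    proof (elim disjE)
      assume "Y1 X G p0 p1"
      then obtain H where h: "H \<in> fst X" "G \<subseteq> tclos H" "tcomp H p0 p1" "closed p0" "closed p1"
        unfolding Y1_def by blast
      have env: "is_env H" using eb_env_fst[OF XB h(1)] .
      obtain r1 where s1: "step p1 r1" and alt: "(tcomp H r0 r1 \<and> closed r0 \<and> closed r1) \<or>
         (\<exists>F0 F1 q0 q1. r0 = plug F0 q0 \<and> r1 = plug F1 q1 \<and> cclos H F0 F1 \<and> (H, q0, q1) \<in> snd X \<and> is_prog q0 \<and> is_prog q1)"
        using Y1_step[OF XB h(1) h(3) h(4) h(5) pp(1) st] by blast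
      have ss1: "steps p1 r1" using s1 by simp
      from alt show ?thesis
      proof
        assume a: "tcomp H r0 r1 \<and> closed r0 \<and> closed r1"
        have t1: "(G, r0, r1) \<in> snd (Yrel X)" using a h envG unfolding Yrel_snd Y1_def by blast
        show ?thesis
        proof (intro conjI impI)
          assume "is_prog r0"
          then have "is_prog r1" using tcomp_ResetE[of H _ r1] a env by (auto simp: is_prog_def)
          then show "\<exists>p1'. steps p1 p1' \<and> is_prog p1' \<and> (G, r0, p1') \<in> snd (Yrel X)" using ss1 t1 by blast
        next
          assume v: "is_val r0"
          then have v1: "is_val r1" using tcomp_val a env by blast
          have "{(r0, r1)} \<union> G \<in> fst (Yrel X)"
            unfolding Yrel_fst
            using env_ins[OF envG v v1] a ins_tclos2[OF h(2)] h(1) by blast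
          then show "\<exists>v1. steps p1 v1 \<and> is_val v1 \<and> {(r0, v1)} \<union> G \<in> fst (Yrel X)" using ss1 v1 by blast
        qed
      next
        assume "\<exists>F0 F1 q0 q1. r0 = plug F0 q0 \<and> r1 = plug F1 q1 \<and> cclos H F0 F1 \<and> (H, q0, q1) \<in> snd X \<and> is_prog q0 \<and> is_prog q1"
        then obtain F0 F1 q0 q1 where a: "r0 = plug F0 q0" "r1 = plug F1 q1" "cclos H F0 F1" "(H, q0, q1) \<in> snd X" "is_prog q0" "is_prog q1"
          by blast
        have t1: "(G, r0, r1) \<in> snd (Yrel X)" unfolding Yrel_snd Y2_def using a h envG by blast
        show ?thesis
        proof (intro conjI impI)
          assume "is_prog r0"
          then have "is_prog r1" using cclos_prog[OF a(3) a(5) a(6)] a by simp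
          then show "\<exists>p1'. steps p1 p1' \<and> is_prog p1' \<and> (G, r0, p1') \<in> snd (Yrel X)" using ss1 t1 by blast
        next
          assume v: "is_val r0"
          then show "\<exists>v1. steps p1 v1 \<and> is_val v1 \<and> {(r0, v1)} \<union> G \<in> fst (Yrel X)"
            using eval_plug_nonval[of F0 q0] cclos_eval[OF a(3)] prog_not_val[OF a(5)] a(1) by simp
        qed
      qed
    next
      assume "Y2 X G p0 p1"
      then obtain H F0 F1 q0 q1 where h: "p0 = plug F0 q0" "p1 = plug F1 q1" "G \<subseteq> tclos H"
        "cclos H F0 F1" "(H, q0, q1) \<in> snd X" "is_prog q0" "is_prog q1"
        unfolding Y2_def by blast
      have ev: "eval_ctx F0" "eval_ctx F1" using cclos_eval[OF h(4)] by auto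
      obtain q0' where q: "step q0 q0'" "r0 = plug F0 q0'" using step_in_ctx[OF st h(1) ev(1) h(6)] by blast
      from prog_step_shape[OF q(1) h(6)] show ?thesis
      proof
        assume pq: "is_prog q0'"
        obtain q1' where q1: "steps q1 q1'" "is_prog q1'" "(H, q0', q1') \<in> snd X"
          using eb_c2a[OF XB h(5) h(6) h(7) q(1) pq] by blast
        have ss: "steps p1 (plug F1 q1')" using steps_ctx[OF q1(1) ev(2)] h(2) by simp
        have t1: "(G, r0, plug F1 q1') \<in> snd (Yrel X)" unfolding Yrel_snd Y2_def
          using envG q(2) h(3) h(4) q1(3) pq q1(2) by blast
        show ?thesis
        proof (intro conjI impI)
          assume "is_prog r0"
          then have "is_prog (plug F1 q1')" using cclos_prog[OF h(4) pq q1(2)] q(2) by simp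
          then show "\<exists>p1'. steps p1 p1' \<and> is_prog p1' \<and> (G, r0, p1') \<in> snd (Yrel X)" using ss t1 by blast
        next
          assume "is_val r0"
          then show "\<exists>v1. steps p1 v1 \<and> is_val v1 \<and> {(r0, v1)} \<union> G \<in> fst (Yrel X)"
            using eval_plug_nonval[of F0 q0'] ev(1) prog_not_val[OF pq] q(2) by simp
        qed
      next
        assume vq: "is_val q0'"
        obtain w1 where w: "steps q1 w1" "is_val w1" "{(q0', w1)} \<union> H \<in> fst X"
          using eb_c2b[OF XB h(5) h(6) h(7) q(1) vq] by blast
        have envH': "is_env ({(q0', w1)} \<union> H)" using eb_env_fst[OF XB w(3)] .
        have cq: "closed q0'" "closed w1" using env_val[OF envH', of q0' w1] by auto
        have envH: "is_env H" using eb_env_snd[OF XB h(5)] by blast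
        have ss: "steps p1 (plug F1 w1)" using steps_ctx[OF w(1) ev(2)] h(2) by simp
        have sub: "tclos H \<subseteq> tclos ({(q0', w1)} \<union> H)" by (rule tclos_sub) blast
        have Gsub: "G \<subseteq> tclos ({(q0', w1)} \<union> H)" using h(3) sub by blast
        show ?thesis
        proof (intro conjI impI)
          assume pr: "is_prog r0"
          have nq: "\<not> is_prog q0'" using vq prog_not_val by blast
          have pr1: "is_prog (plug F1 w1)" using cclos_prog2[OF h(4), of q0' w1] pr q(2) nq by simp
          have cc: "cclos ({(q0', w1)} \<union> H) F0 F1" using cclos_mono[OF h(4) sub] .
          have "tcomp ({(q0', w1)} \<union> H) r0 (plug F1 w1)"
            using ctcomp_plug[OF cclos_ctcomp[OF cc] tcomp.base[of q0' w1]] q(2) by simp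
          moreover have "closed r0" "closed (plug F1 w1)" using cclos_closed[OF h(4) cq] q(2) by auto
          ultimately have "(G, r0, plug F1 w1) \<in> snd (Yrel X)" unfolding Yrel_snd Y1_def
            using envG Gsub w(3) by blast
          then show "\<exists>p1'. steps p1 p1' \<and> is_prog p1' \<and> (G, r0, p1') \<in> snd (Yrel X)" using ss pr1 by blast
        next
          assume vr: "is_val r0"
          have "F0 = Hole" using eval_plug_nonval[of F0 q0'] ev(1) vr q(2) by (cases F0) (auto simp: is_val_def)
          then have F1: "F1 = Hole" using cclos_hole h(4) by blast
          have "{(r0, w1)} \<union> G \<in> fst (Yrel X)" unfolding Yrel_fst
            using env_ins[OF envG _ w(2) _ cq(2), of r0] vr ins_tclos[OF h(3), of r0 w1] cq \<open>F0 = Hole\<close> q(2) w(3)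
            by auto
          then show "\<exists>v1. steps p1 v1 \<and> is_val v1 \<and> {(r0, v1)} \<union> G \<in> fst (Yrel X)"
            using ss F1 w(2) by auto
        qed
      qed
    next
      assume "Y3 X G p0 p1"
      then obtain H where h: "G \<subseteq> tclos H" "(H, p0, p1) \<in> snd X" unfolding Y3_def by blast
      show ?thesis
      proof (intro conjI impI)
        assume "is_prog r0"
        then obtain p1' where "steps p1 p1'" "is_prog p1'" "(H, r0, p1') \<in> snd X"
          using eb_c2a[OF XB h(2) pp st] by blast
        then show "\<exists>p1'. steps p1 p1' \<and> is_prog p1' \<and> (G, r0, p1') \<in> snd (Yrel X)"
          unfolding Yrel_snd Y3_def using envG h(1) by blast
      next
        assume v: "is_val r0"
        then obtain v1 where w: "steps p1 v1" "is_val v1" "{(r0, v1)} \<union> H \<in> fst X"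
          using eb_c2b[OF XB h(2) pp st] by blast
        have envH': "is_env ({(r0, v1)} \<union> H)" using eb_env_fst[OF XB w(3)] .
        have cq: "closed r0" "closed v1" using env_val[OF envH', of r0 v1] by auto
        have "{(r0, v1)} \<union> G \<in> fst (Yrel X)" unfolding Yrel_fst
          using env_ins[OF envG v w(2) cq] ins_tclos[OF h(1) cq] w(3) by blast
        then show "\<exists>v1. steps p1 v1 \<and> is_val v1 \<and> {(r0, v1)} \<union> G \<in> fst (Yrel X)" using w by blast
      qed
    qed
  } note main = this
  show "(\<forall>p0'. step p0 p0' \<longrightarrow> is_prog p0' \<longrightarrow> (\<exists>p1'. steps p1 p1' \<and> is_prog p1' \<and> (G, p0', p1') \<in> snd (Yrel X))) \<and>
   (\<forall>v0. step p0 v0 \<longrightarrow> is_val v0 \<longrightarrow> (\<exists>v1. steps p1 v1 \<and> is_val v1 \<and> {(v0, v1)} \<union> G \<in> fst (Yrel X)))"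
    using main by blast
qed

lemma Y_rel: assumes XB: "env_bisim X" shows "env_relation (Yrel X)"
  unfolding env_relation_def
proof (intro conjI ballI)
  fix G assume "G \<in> fst (Yrel X)" then show "is_env G" by (simp add: Yrel_fst)
next
  fix x assume x: "x \<in> snd (Yrel X)"
  obtain G t0 t1 where xe: "x = (G, t0, t1)" by (cases x) auto
  have m: "is_env G" "Y1 X G t0 t1 \<or> Y2 X G t0 t1 \<or> Y3 X G t0 t1" using x xe by (simp_all add: Yrel_snd)
  have "closed t0 \<and> closed t1" using m(2)
  proof (elim disjE)
    assume "Y1 X G t0 t1" then show ?thesis unfolding Y1_def by blast
  next
    assume "Y2 X G t0 t1"
    then obtain H F0 F1 p0 p1 where h: "t0 = plug F0 p0" "t1 = plug F1 p1"
        "cclos H F0 F1" "(H, p0, p1) \<in> snd X" unfolding Y2_def by blast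
    then show ?thesis using cclos_closed[OF h(3), of p0 p1] eb_env_snd[OF XB h(4)] by simp
  next
    assume "Y3 X G t0 t1"
    then obtain H where "(H, t0, t1) \<in> snd X" unfolding Y3_def by blast
    then show ?thesis using eb_env_snd[OF XB] by blast
  qed
  then show "case x of (E, t0, t1) \<Rightarrow> is_env E \<and> closed t0 \<and> closed t1" using xe m(1) by simp
qed

lemma Y_c1: assumes XB: "env_bisim X"
  and m: "(G, t0, t1) \<in> snd (Yrel X)" and np: "\<not> (is_prog t0 \<and> is_prog t1)"
  and pE: "pure_ctx E0" "pure_ctx E1" and cE: "cclos G E0 E1"
  shows "(G, Reset (plug E0 t0), Reset (plug E1 t1)) \<in> snd (Yrel X)"
proof -
  have envG: "is_env G" and cases: "Y1 X G t0 t1 \<or> Y2 X G t0 t1 \<or> Y3 X G t0 t1"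
    using m by (simp_all add: Yrel_snd)
  show ?thesis using cases
  proof (elim disjE)
    assume "Y1 X G t0 t1"
    then obtain H where h: "H \<in> fst X" "G \<subseteq> tclos H" "tcomp H t0 t1" "closed t0" "closed t1"
      unfolding Y1_def by blast
    have cH: "cclos H E0 E1" using cclos_mono[OF cE tclos_mono[OF h(2)]] .
    have "tcomp H (Reset (plug E0 t0)) (Reset (plug E1 t1))"
      using tcomp.rst[OF ctcomp_plug[OF cclos_ctcomp[OF cH] h(3)]] .
    moreover have "closed (Reset (plug E0 t0))" "closed (Reset (plug E1 t1))"
      using cclos_closed[OF cH h(4) h(5)] by (auto simp: closed_def)
    ultimately show ?thesis unfolding Yrel_snd Y1_def using envG h(1,2) by blast
  next
    assume "Y2 X G t0 t1"
    then obtain H F0 F1 p0 p1 where h: "t0 = plug F0 p0" "t1 = plug F1 p1" "G \<subseteq> tclos H"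
        "cclos H F0 F1" "(H, p0, p1) \<in> snd X" "is_prog p0" "is_prog p1" unfolding Y2_def by blast
    have cH: "cclos H E0 E1" using cclos_mono[OF cE tclos_mono[OF h(3)]] .
    have cc: "cclos H (CReset (ccomp E0 F0)) (CReset (ccomp E1 F1))"
      using cclos.rst[OF cclos_comp[OF cH h(4)]] .
    have "Reset (plug E0 t0) = plug (CReset (ccomp E0 F0)) p0" "Reset (plug E1 t1) = plug (CReset (ccomp E1 F1)) p1"
      using h(1,2) by simp_all
    then show ?thesis unfolding Yrel_snd Y2_def using envG h(3,5,6,7) cc by metis
  next
    assume "Y3 X G t0 t1"
    then obtain H where h: "G \<subseteq> tclos H" "(H, t0, t1) \<in> snd X" unfolding Y3_def by blast
    have cH: "cclos H E0 E1" using cclos_mono[OF cE tclos_mono[OF h(1)]] .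
    have "(H, Reset (plug E0 t0), Reset (plug E1 t1)) \<in> snd X" using eb_c1[OF XB h(2) np pE cH] .
    then show ?thesis unfolding Yrel_snd Y3_def using envG h(1) by blast
  qed
qed

lemma Y_c3: assumes XB: "env_bisim X"
  and G: "G \<in> fst (Yrel X)" and L: "(Lam t0, Lam t1) \<in> G" and w: "(w0, w1) \<in> tclos G"
  and v: "is_val w0" "is_val w1"
  shows "(G, subst 0 w0 t0, subst 0 w1 t1) \<in> snd (Yrel X)"
proof -
  obtain H where envG: "is_env G" and h: "H \<in> fst X" "G \<subseteq> tclos H" using G by (auto simp: Yrel_fst)
  have env: "is_env H" using eb_env_fst[OF XB h(1)] .
  have wH: "(w0, w1) \<in> tclos H" using tclos_mono[OF h(2)] w by blast
  have LH: "(Lam t0, Lam t1) \<in> tclos H" using h(2) L by blast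
  then have tL: "tcomp H (Lam t0) (Lam t1)" and cL: "closed (Lam t0)" "closed (Lam t1)" by (auto simp: tclos_def)
  from tcomp_LamE[OF tL] show ?thesis
  proof
    assume "(Lam t0, Lam t1) \<in> H"
    then have "(H, subst 0 w0 t0, subst 0 w1 t1) \<in> snd X" using eb_c3[OF XB h(1) _ wH v] by blast
    then show ?thesis unfolding Yrel_snd Y3_def using envG h(2) by blast
  next
    assume "\<exists>b. Lam t1 = Lam b \<and> tcomp H t0 b"
    then have tt: "tcomp H t0 t1" by auto
    have tw: "tcomp H w0 w1" "closed w0" "closed w1" using wH by (auto simp: tclos_def)
    have "tcomp H (subst 0 w0 t0) (subst 0 w1 t1)" using tcomp_subst[OF tt env tw(1)] .
    moreover have "closed (subst 0 w0 t0)" "closed (subst 0 w1 t1)"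
      using closed_subst[of 0 t0 w0] closed_subst[of 0 t1 w1] cL tw by (auto simp: closed_def)
    ultimately show ?thesis unfolding Yrel_snd Y1_def using envG h by blast
  qed
qed

lemma Y_bisim: assumes XB: "env_bisim X" shows "env_bisim (Yrel X)"
proof (rule bisim_intro)
  show "env_relation (Yrel X)" using Y_rel[OF XB] .
  show "fwd (Yrel X)" using Y_fwd[OF XB] .
  show "fwd (conv (Yrel X))" unfolding Yrel_conv using Y_fwd[OF env_bisim_conv[OF XB]] .
qed (auto intro: Y_c1[OF XB] Y_c3[OF XB])

lemma ctcomp_refl: "ctcomp H C C"
  by (induction C) (auto intro: ctcomp.intros tcomp_refl)

lemma steps_reset_val: assumes "steps (Reset v) w" "is_val v" "is_val w" shows "w = v"
  using assms(1)
proof (cases rule: converse_rtranclpE)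
  case base
  then show ?thesis using assms(3) by (auto simp: is_val_def)
next
  case (step z)
  then have "z = v" using reset_val_step assms(2) by blast
  with step(2) show ?thesis
  proof (cases rule: converse_rtranclpE)
    case base then show ?thesis using \<open>z = v\<close> by simp
  next
    case (step y)
    then show ?thesis using val_no_step assms(2) \<open>z = v\<close> by blast
  qed
qed

theorem lemma13:
  assumes "is_env E"
    and "closed v0" and "is_val v0" and "closed v1" and "is_val v1"
    and "bisim_p E v0 v1"
    and "closed (plug C v0)" and "closed (plug C v1)"
  shows "bisim_p E (plug C v0) (plug C v1)"
proof -
  obtain X where XB: "env_bisim X" and m: "(E, v0, v1) \<in> snd X" using assms(6) unfolding bisim_p_def by blast
  have np: "\<not> (is_prog v0 \<and> is_prog v1)" using assms(3) prog_not_val by blast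
  have "(E, Reset (plug Hole v0), Reset (plug Hole v1)) \<in> snd X"
    using eb_c1[OF XB m np _ _ cclos.hole] by simp
  then have m2: "(E, Reset v0, Reset v1) \<in> snd X" by simp
  have st: "step (Reset v0) v0" using step.reset[of Hole v0] assms(3) by simp
  obtain w1 where w: "steps (Reset v1) w1" "is_val w1" "{(v0, w1)} \<union> E \<in> fst X"
    using eb_c2b[OF XB m2 _ _ st assms(3)] by (auto simp: is_prog_def)
  have "w1 = v1" using steps_reset_val[OF w(1) assms(5) w(2)] .
  then have HX: "{(v0, v1)} \<union> E \<in> fst X" using w(3) by simp
  let ?H = "{(v0, v1)} \<union> E"
  have sub: "E \<subseteq> tclos ?H"
  proof
    fix x assume "x \<in> E"
    then show "x \<in> tclos ?H" using assms(1) unfolding is_env_def tclos_def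
      by (cases x) (auto intro: tcomp.base)
  qed
  have "tcomp ?H (plug C v0) (plug C v1)"
    using ctcomp_plug[OF ctcomp_refl tcomp.base[of v0 v1 ?H]] by simp
  then have "Y1 X E (plug C v0) (plug C v1)" unfolding Y1_def using HX sub assms(7,8) by blast
  then have "(E, plug C v0, plug C v1) \<in> snd (Yrel X)" using assms(1) by (simp add: Yrel_snd)
  then show ?thesis unfolding bisim_p_def using Y_bisim[OF XB] by blast
qed

end
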